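(* Let $G$ be a locally finite quasi-transitive graph with infinitely many ends, and let $(T,\mathcal{X})$ be a canonical tree-decomposition of $G$ such that: every bag is a finite clique; for every adhesion set $X$ there is a unique edge $tt'\in E(T)$ with $X=X_t\cap X_{t'}$; and there is an end of $G$ which is stabilized by all automorphisms of $G$. Then $G$ does not have a periodic proper vertex-coloring.
   Context: A tree-decomposition of $G$ is a pair $(T,\mathcal{X})$ with $T$ a tree and $\mathcal{X}=(X_t)_{t\in V(T)}$ subsets (bags) of $V(G)$ covering $V(G)$, such that every edge has both endpoints in some bag and for each vertex $v$ the set $\{t: v\in X_t\}$ induces a connected subtree. Its adhesion sets are the sets $X_t\cap X_{t'}$ for $tt'\in E(T)$. It is canonical if $\mathrm{Aut}(G)$ acts by automorphisms on $T$ with $g(X_t)=X_{g\cdot t}$. Locally finite: all degrees finite; quasi-transitive: finitely many $\mathrm{Aut}(G)$-orbits on $V(G)$. Ends: equivalence classes of rays, two rays equivalent if joined by infinitely many disjoint paths. A vertex-coloring is periodic if the subgroup of color-preserving automorphisms has finitely many orbits on $V(G)$. *)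

theory Defs
  imports Main
begin

text \<open>A (simple, possibly infinite) graph on the vertex type 'v is given by a
 symmetric irreflexive adjacency relation E; its vertex set is the whole type.\<close>

definition graph :: "('v \<Rightarrow> 'v \<Rightarrow> bool) \<Rightarrow> bool" where
  "graph E \<longleftrightarrow> (\<forall>x y. E x y \<longrightarrow> E y x) \<and> (\<forall>x. \<not> E x x)"

definition gpath :: "('v \<Rightarrow> 'v \<Rightarrow> bool) \<Rightarrow> 'v list \<Rightarrow> bool" where
  "gpath E ps \<longleftrightarrow> ps \<noteq> [] \<and> distinct ps \<and>
     (\<forall>i. Suc i < length ps \<longrightarrow> E (ps ! i) (ps ! Suc i))"

definition connected_graph :: "('v \<Rightarrow> 'v \<Rightarrow> bool) \<Rightarrow> bool" where
  "connected_graph E \<longleftrightarrow> (\<forall>u v. \<exists>ps. gpath E ps \<and> hd ps = u \<and> last ps = v)"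

definition induces_connected :: "('v \<Rightarrow> 'v \<Rightarrow> bool) \<Rightarrow> 'v set \<Rightarrow> bool" where
  "induces_connected E S \<longleftrightarrow>
     (\<forall>u\<in>S. \<forall>v\<in>S. \<exists>ps. gpath E ps \<and> hd ps = u \<and> last ps = v \<and> set ps \<subseteq> S)"

definition has_cycle :: "('v \<Rightarrow> 'v \<Rightarrow> bool) \<Rightarrow> bool" where
  "has_cycle E \<longleftrightarrow> (\<exists>cs. gpath E cs \<and> length cs \<ge> 3 \<and> E (last cs) (hd cs))"

definition is_tree :: "('t \<Rightarrow> 't \<Rightarrow> bool) \<Rightarrow> bool" where
  "is_tree T \<longleftrightarrow> graph T \<and> connected_graph T \<and> \<not> has_cycle T"

definition locally_finite :: "('v \<Rightarrow> 'v \<Rightarrow> bool) \<Rightarrow> bool" where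
  "locally_finite E \<longleftrightarrow> (\<forall>v. finite {u. E v u})"

definition Aut :: "('v \<Rightarrow> 'v \<Rightarrow> bool) \<Rightarrow> ('v \<Rightarrow> 'v) set" where
  "Aut E = {g. bij g \<and> (\<forall>x y. E x y \<longleftrightarrow> E (g x) (g y))}"

definition orbits :: "('v \<Rightarrow> 'v) set \<Rightarrow> 'v set set" where
  "orbits H = {(\<lambda>g. g v) ` H | v. True}"

definition quasi_transitive :: "('v \<Rightarrow> 'v \<Rightarrow> bool) \<Rightarrow> bool" where
  "quasi_transitive E \<longleftrightarrow> finite (orbits (Aut E))"

definition is_ray :: "('v \<Rightarrow> 'v \<Rightarrow> bool) \<Rightarrow> (nat \<Rightarrow> 'v) \<Rightarrow> bool" where
  "is_ray E R \<longleftrightarrow> inj R \<and> (\<forall>n. E (R n) (R (Suc n)))"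

definition ray_equiv :: "('v \<Rightarrow> 'v \<Rightarrow> bool) \<Rightarrow> (nat \<Rightarrow> 'v) \<Rightarrow> (nat \<Rightarrow> 'v) \<Rightarrow> bool" where
  "ray_equiv E R1 R2 \<longleftrightarrow>
     (\<exists>P. infinite P \<and>
        (\<forall>p\<in>P. gpath E p \<and> hd p \<in> range R1 \<and> last p \<in> range R2) \<and>
        (\<forall>p\<in>P. \<forall>q\<in>P. p \<noteq> q \<longrightarrow> set p \<inter> set q = {}))"

definition ends :: "('v \<Rightarrow> 'v \<Rightarrow> bool) \<Rightarrow> (nat \<Rightarrow> 'v) set set" where
  "ends E = {{R'. is_ray E R' \<and> ray_equiv E R R'} | R. is_ray E R}"

definition stabilizes_end :: "('v \<Rightarrow> 'v) \<Rightarrow> (nat \<Rightarrow> 'v) set \<Rightarrow> bool" where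
  "stabilizes_end g \<omega> \<longleftrightarrow> (\<forall>R\<in>\<omega>. g \<circ> R \<in> \<omega>)"

definition tree_decomposition ::
  "('v \<Rightarrow> 'v \<Rightarrow> bool) \<Rightarrow> ('t \<Rightarrow> 't \<Rightarrow> bool) \<Rightarrow> ('t \<Rightarrow> 'v set) \<Rightarrow> bool" where
  "tree_decomposition E T X \<longleftrightarrow> is_tree T \<and>
     (\<Union>t. X t) = UNIV \<and>
     (\<forall>u v. E u v \<longrightarrow> (\<exists>t. u \<in> X t \<and> v \<in> X t)) \<and>
     (\<forall>v. induces_connected T {t. v \<in> X t})"

text \<open>Canonical: Aut(G) acts on T by tree automorphisms, compatibly with the bags.\<close>
definition canonical_td ::
  "('v \<Rightarrow> 'v \<Rightarrow> bool) \<Rightarrow> ('t \<Rightarrow> 't \<Rightarrow> bool) \<Rightarrow> ('t \<Rightarrow> 'v set) \<Rightarrow> bool" where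
  "canonical_td E T X \<longleftrightarrow>
     (\<exists>\<sigma> :: ('v \<Rightarrow> 'v) \<Rightarrow> 't \<Rightarrow> 't.
        \<sigma> id = id \<and>
        (\<forall>g\<in>Aut E. \<forall>h\<in>Aut E. \<sigma> (g \<circ> h) = \<sigma> g \<circ> \<sigma> h) \<and>
        (\<forall>g\<in>Aut E. \<sigma> g \<in> Aut T \<and> (\<forall>t. g ` X t = X (\<sigma> g t))))"

definition is_clique :: "('v \<Rightarrow> 'v \<Rightarrow> bool) \<Rightarrow> 'v set \<Rightarrow> bool" where
  "is_clique E S \<longleftrightarrow> (\<forall>u\<in>S. \<forall>v\<in>S. u \<noteq> v \<longrightarrow> E u v)"

definition unique_adhesion :: "('t \<Rightarrow> 't \<Rightarrow> bool) \<Rightarrow> ('t \<Rightarrow> 'v set) \<Rightarrow> bool" where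
  "unique_adhesion T X \<longleftrightarrow>
     (\<forall>t1 t2 s1 s2. T t1 t2 \<and> T s1 s2 \<and> X t1 \<inter> X t2 = X s1 \<inter> X s2
        \<longrightarrow> {t1, t2} = {s1, s2})"

definition proper_coloring :: "('v \<Rightarrow> 'v \<Rightarrow> bool) \<Rightarrow> ('v \<Rightarrow> 'c) \<Rightarrow> bool" where
  "proper_coloring E c \<longleftrightarrow> (\<forall>u v. E u v \<longrightarrow> c u \<noteq> c v)"

definition periodic_coloring :: "('v \<Rightarrow> 'v \<Rightarrow> bool) \<Rightarrow> ('v \<Rightarrow> 'c) \<Rightarrow> bool" where
  "periodic_coloring E c \<longleftrightarrow> finite (orbits {g \<in> Aut E. \<forall>v. c (g v) = c v})"

end

theory Submission
  imports Defs "HOL-Library.Transitive_Closure_Table"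
begin

lemma gpath_ConsD:
  assumes "gpath E (a # b # ps)"
  shows "E a b" "gpath E (b # ps)"
proof -
  show "E a b" using assms unfolding gpath_def by force
  show "gpath E (b # ps)" unfolding gpath_def
  proof (intro conjI allI impI)
    fix i assume "Suc i < length (b # ps)"
    then have "Suc (Suc i) < length (a # b # ps)" by simp
    then have "E ((a # b # ps) ! Suc i) ((a # b # ps) ! Suc (Suc i))"
      using assms unfolding gpath_def by blast
    then show "E ((b # ps) ! i) ((b # ps) ! Suc i)" by simp
  qed (use assms in \<open>auto simp: gpath_def\<close>)
qed

lemma gpath_reach:
  assumes "gpath E ps" "set ps \<subseteq> S"
  shows "(\<lambda>x y. E x y \<and> x \<in> S \<and> y \<in> S)\<^sup>*\<^sup>* (hd ps) (last ps)"
  using assms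
proof (induction ps)
  case Nil
  then show ?case by (simp add: gpath_def)
next
  case (Cons a ps)
  show ?case
  proof (cases ps)
    case Nil
    then show ?thesis by simp
  next
    case (Cons b qs)
    have g: "E a b" "gpath E (b # qs)"
      using gpath_ConsD[of E a b qs] Cons.prems(1) \<open>ps = b # qs\<close> by simp_all
    have sub: "set ps \<subseteq> S" using Cons.prems(2) by simp
    have ih: "(\<lambda>x y. E x y \<and> x \<in> S \<and> y \<in> S)\<^sup>*\<^sup>* (hd ps) (last ps)"
      using Cons.IH[OF _ sub] g(2) \<open>ps = b # qs\<close> by simp
    have st: "E a b \<and> a \<in> S \<and> b \<in> S" using g(1) Cons.prems(2) \<open>ps = b # qs\<close> by simp
    have "(\<lambda>x y. E x y \<and> x \<in> S \<and> y \<in> S)\<^sup>*\<^sup>* a (last ps)"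
      using converse_rtranclp_into_rtranclp[of "\<lambda>x y. E x y \<and> x \<in> S \<and> y \<in> S", OF st] ih
        \<open>ps = b # qs\<close> by simp
    then show ?thesis using \<open>ps = b # qs\<close> by simp
  qed
qed

lemma rtrancl_path_gpath:
  assumes "rtrancl_path r x xs y" "distinct (x # xs)" "\<And>a b. r a b \<Longrightarrow> E a b"
  shows "gpath E (x # xs)" "last (x # xs) = y"
proof -
  show "gpath E (x # xs)" unfolding gpath_def
  proof (intro conjI allI impI)
    fix i assume "Suc i < length (x # xs)"
    then have "i < length xs" by simp
    from rtrancl_path_nth[OF assms(1) this] assms(3)
    show "E ((x # xs) ! i) ((x # xs) ! Suc i)" by simp
  qed (use assms in auto)
  show "last (x # xs) = y"
  proof (cases xs)
    case Nil
    then show ?thesis using assms(1) by (auto elim: rtrancl_path.cases)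
  next
    case (Cons a list)
    then show ?thesis using rtrancl_path_last[OF assms(1)] by simp
  qed
qed

lemma rtranclp_sym_rev:
  assumes "\<And>a b. r a b \<Longrightarrow> r b a" "r\<^sup>*\<^sup>* x y"
  shows "r\<^sup>*\<^sup>* y x"
  using assms(2)
proof (induction rule: rtranclp_induct)
  case base then show ?case by simp
next
  case (step y z)
  then show ?case using assms(1) by (meson converse_rtranclp_into_rtranclp)
qed

lemma connected_reach:
  assumes "connected_graph E"
  shows "E\<^sup>*\<^sup>* u v"
proof -
  obtain ps where ps: "gpath E ps" "hd ps = u" "last ps = v"
    using assms unfolding connected_graph_def by blast
  have "(\<lambda>x y. E x y \<and> x \<in> UNIV \<and> y \<in> UNIV)\<^sup>*\<^sup>* u v"
    using gpath_reach[OF ps(1), of UNIV] ps by simp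
  then show ?thesis by (rule rtranclp_mono[THEN predicate2D, rotated]) auto
qed

lemma induces_reach:
  assumes "induces_connected E S" "u \<in> S" "v \<in> S"
  shows "(\<lambda>x y. E x y \<and> x \<in> S \<and> y \<in> S)\<^sup>*\<^sup>* u v"
proof -
  obtain ps where ps: "gpath E ps" "hd ps = u" "last ps = v" "set ps \<subseteq> S"
    using assms unfolding induces_connected_def by blast
  show ?thesis using gpath_reach[OF ps(1) ps(4)] ps by simp
qed

locale tree =
  fixes T :: "'t \<Rightarrow> 't \<Rightarrow> bool"
  assumes tree: "is_tree T"
begin

lemma Tsym: "T x y \<Longrightarrow> T y x" and Tirr: "\<not> T x x"
  using tree unfolding is_tree_def graph_def by blast+

lemma Treach: "T\<^sup>*\<^sup>* x y"
  using tree connected_reach[of T] unfolding is_tree_def by blast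

definition Tm :: "'t \<Rightarrow> 't \<Rightarrow> 't \<Rightarrow> 't \<Rightarrow> bool" where
  "Tm a b x y \<longleftrightarrow> T x y \<and> {x, y} \<noteq> {a, b}"

definition Side :: "'t \<Rightarrow> 't \<Rightarrow> 't set" where
  "Side a b = {x. (Tm a b)\<^sup>*\<^sup>* a x}"

lemma Tm_comm: "Tm a b = Tm b a"
  unfolding Tm_def by (intro ext) (auto simp: insert_commute)

lemma Tm_sym: "Tm a b x y \<Longrightarrow> Tm a b y x"
  unfolding Tm_def using Tsym by (auto simp: insert_commute)

lemma Tm_rev: "(Tm a b)\<^sup>*\<^sup>* x y \<Longrightarrow> (Tm a b)\<^sup>*\<^sup>* y x"
  using rtranclp_sym_rev[of "Tm a b"] Tm_sym by blast

lemma Side_refl: "a \<in> Side a b"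
  unfolding Side_def by simp

lemma S1: assumes "T a b" shows "\<not> (Tm a b)\<^sup>*\<^sup>* a b"
proof
  assume "(Tm a b)\<^sup>*\<^sup>* a b"
  then obtain xs where "rtrancl_path (Tm a b) a xs b"
    using rtranclp_eq_rtrancl_path by metis
  then obtain ys where ys: "rtrancl_path (Tm a b) a ys b" "distinct (a # ys)"
    using rtrancl_path_distinct by metis
  have g: "gpath T (a # ys)" "last (a # ys) = b"
    using rtrancl_path_gpath[OF ys] unfolding Tm_def by blast+
  have "ys \<noteq> []"
    using ys(1) Tirr assms by (auto elim: rtrancl_path.cases)
  moreover have "\<not> (\<exists>c. ys = [c])"
  proof
    assume "\<exists>c. ys = [c]"
    then obtain c where "ys = [c]" by blast
    with ys(1) have "Tm a b a c" "c = b"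
      by (auto elim!: rtrancl_path.cases)
    then show False unfolding Tm_def by simp
  qed
  ultimately have "length (a # ys) \<ge> 3"
    by (cases ys rule: remdups_adj.cases) auto
  moreover have "T (last (a # ys)) (hd (a # ys))" using g(2) assms Tsym by simp
  ultimately have "has_cycle T" using g(1) unfolding has_cycle_def by blast
  then show False using tree unfolding is_tree_def by blast
qed

lemma S1': assumes "T a b" shows "b \<notin> Side a b" "a \<notin> Side b a"
  using S1[OF assms] S1[OF Tsym[OF assms]] unfolding Side_def by auto

lemma S4: assumes "T a b" shows "Side a b \<inter> Side b a = {}"
proof (rule ccontr)
  assume "Side a b \<inter> Side b a \<noteq> {}"
  then obtain x where "(Tm a b)\<^sup>*\<^sup>* a x" "(Tm b a)\<^sup>*\<^sup>* b x" unfolding Side_def by blast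
  then have "(Tm a b)\<^sup>*\<^sup>* b x" using Tm_comm by metis
  then have "(Tm a b)\<^sup>*\<^sup>* x b" using Tm_rev by blast
  then have "(Tm a b)\<^sup>*\<^sup>* a b" using \<open>(Tm a b)\<^sup>*\<^sup>* a x\<close> by (rule rtranclp_trans[rotated])
  then show False using S1[OF assms] by blast
qed

lemma S3:
  assumes "T t s1" "T t s2" "s1 \<noteq> s2"
  shows "Side s1 t \<subseteq> Side t s2"
proof
  fix x assume "x \<in> Side s1 t"
  then have "(Tm s1 t)\<^sup>*\<^sup>* s1 x" unfolding Side_def by simp
  then show "x \<in> Side t s2"
  proof (induction rule: rtranclp_induct)
    case base
    have "{t, s1} \<noteq> {t, s2}" using assms(3) by (simp add: doubleton_eq_iff)
    then have "Tm t s2 t s1" unfolding Tm_def using assms(1) by simp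
    then show ?case unfolding Side_def by simp
  next
    case (step y z)
    have "y \<in> Side s1 t" "z \<in> Side s1 t" using step unfolding Side_def by auto
    then have "y \<noteq> t" "z \<noteq> t" using S1'(1)[OF Tsym[OF assms(1)]] by auto
    then have "{y, z} \<noteq> {t, s2}" by (simp add: doubleton_eq_iff)
    then have "Tm t s2 y z" using step(2) unfolding Tm_def by simp
    then show ?case using step(3) unfolding Side_def by auto
  qed
qed

lemma S34:
  assumes "T t s1" "T t s2" "s1 \<noteq> s2"
  shows "Side s1 t \<inter> Side s2 t = {}"
  using S3[OF assms] S4[OF assms(2)] by blast

lemma S5:
  assumes "x \<noteq> t"
  shows "\<exists>s. T t s \<and> x \<in> Side s t"
proof -
  have "T\<^sup>*\<^sup>* x t" by (rule Treach)
  then show ?thesis using assms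
  proof (induction rule: converse_rtranclp_induct)
    case base then show ?case by simp
  next
    case (step x y)
    show ?case
    proof (cases "y = t")
      case True
      then show ?thesis using step Tsym Side_refl by blast
    next
      case False
      then obtain s where s: "T t s" "y \<in> Side s t" using step by blast
      have "{y, x} \<noteq> {s, t}" using False step(4) by (auto simp: doubleton_eq_iff)
      then have "Tm s t y x" unfolding Tm_def using step(1) Tsym by auto
      then show ?thesis using s unfolding Side_def by auto
    qed
  qed
qed

lemma S7:
  assumes "\<And>x y. T x y \<longleftrightarrow> T (\<tau> x) (\<tau> y)" "inj \<tau>" "x \<in> Side a b"
  shows "\<tau> x \<in> Side (\<tau> a) (\<tau> b)"
proof -
  have "(Tm a b)\<^sup>*\<^sup>* a x" using assms(3) unfolding Side_def by simp
  then have "(Tm (\<tau> a) (\<tau> b))\<^sup>*\<^sup>* (\<tau> a) (\<tau> x)"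
  proof (induction rule: rtranclp_induct)
    case base then show ?case by simp
  next
    case (step y z)
    have "{y, z} \<noteq> {a, b}" "T y z" using step(2) unfolding Tm_def by auto
    then have "\<tau> ` {y, z} \<noteq> \<tau> ` {a, b}" using inj_image_eq_iff[OF assms(2)] by metis
    then have "{\<tau> y, \<tau> z} \<noteq> {\<tau> a, \<tau> b}" by simp
    then have "Tm (\<tau> a) (\<tau> b) (\<tau> y) (\<tau> z)"
      using assms(1) \<open>T y z\<close> unfolding Tm_def by auto
    then show ?case using step(3) by auto
  qed
  then show ?thesis unfolding Side_def by simp
qed

end


lemma tail_avoid:
  fixes Q :: "nat \<Rightarrow> 'a"
  assumes "inj Q" "finite A"
  shows "\<exists>N. \<forall>n\<ge>N. Q n \<notin> A"
proof -
  have "finite (Q -` A)" using finite_vimageI[OF assms(2,1)] .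
  then have "\<exists>m. \<forall>n\<in>Q -` A. n < m" by (rule finite_nat_set_iff_bounded[THEN iffD1])
  then obtain m where "\<forall>n\<in>Q -` A. n < m" by blast
  show ?thesis
  proof (intro exI allI impI)
    fix n assume "m \<le> n"
    show "Q n \<notin> A"
    proof
      assume "Q n \<in> A"
      then have "n \<in> Q -` A" by simp
      then have "n < m" using \<open>\<forall>n\<in>Q -` A. n < m\<close> by blast
      then show False using \<open>m \<le> n\<close> by simp
    qed
  qed
qed

lemma kappa_const:
  assumes "\<forall>n. E (Q n) (Q (Suc n))" "\<forall>n\<ge>N. Q n \<notin> A"
    "\<forall>u v. E u v \<longrightarrow> u \<notin> A \<longrightarrow> v \<notin> A \<longrightarrow> \<kappa> u = \<kappa> v"
  shows "n \<ge> N \<Longrightarrow> \<kappa> (Q n) = \<kappa> (Q N)"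
proof (induction n rule: dec_induct)
  case base then show ?case by simp
next
  case (step n)
  have "Q n \<notin> A" "Q (Suc n) \<notin> A" using assms(2) step(1) by auto
  then have "\<kappa> (Q n) = \<kappa> (Q (Suc n))"
    using assms(3)[rule_format, of "Q n" "Q (Suc n)"] assms(1) by blast
  then have "\<kappa> (Q (Suc n)) = \<kappa> (Q n)" by (rule sym)
  then show ?case using step(3) by simp
qed

lemma kappa_change:
  assumes "\<forall>n. E (Q n) (Q (Suc n))"
    "\<forall>u v. E u v \<longrightarrow> u \<notin> A \<longrightarrow> v \<notin> A \<longrightarrow> \<kappa> u = \<kappa> v"
    "\<kappa> (Q 0) \<noteq> \<kappa> (Q m)"
  shows "\<exists>j. Q j \<in> A"
proof (rule ccontr)
  assume "\<not> (\<exists>j. Q j \<in> A)"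
  then have "\<forall>n\<ge>0. Q n \<notin> A" by blast
  from kappa_const[OF assms(1) this assms(2)] have "\<kappa> (Q m) = \<kappa> (Q 0)" by blast
  then show False using assms(3) by simp
qed

lemma path_kappa:
  assumes "gpath E p" "set p \<inter> A = {}"
    "\<forall>u v. E u v \<longrightarrow> u \<notin> A \<longrightarrow> v \<notin> A \<longrightarrow> \<kappa> u = \<kappa> v"
  shows "\<kappa> (hd p) = \<kappa> (last p)"
proof -
  have "set p \<subseteq> - A" using assms(2) by blast
  from gpath_reach[OF assms(1) this]
  have "(\<lambda>x y. E x y \<and> x \<in> - A \<and> y \<in> - A)\<^sup>*\<^sup>* (hd p) (last p)" .
  then show ?thesis
  proof (induction rule: rtranclp_induct)
    case base then show ?case by simp
  next
    case (step y z)
    have "\<kappa> y = \<kappa> z" using assms(3)[rule_format, of y z] step(2) by blast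
    then show ?case using step(3) by simp
  qed
qed

lemma subsingleton_finite:
  assumes "\<And>p q. p \<in> B \<Longrightarrow> q \<in> B \<Longrightarrow> p = q"
  shows "finite B"
proof (cases "B = {}")
  case True then show ?thesis by simp
next
  case False
  then obtain p where "p \<in> B" by blast
  then have "B \<subseteq> {p}" using assms by blast
  then show ?thesis using finite_subset by blast
qed

lemma fin_meet:
  assumes "\<forall>p\<in>P. \<forall>q\<in>P. p \<noteq> q \<longrightarrow> set p \<inter> set q = {}" "finite Y"
  shows "finite {p\<in>P. set p \<inter> Y \<noteq> {}}"
proof -
  have "{p\<in>P. set p \<inter> Y \<noteq> {}} \<subseteq> (\<Union>y\<in>Y. {p\<in>P. y \<in> set p})" by blast
  moreover have "finite {p\<in>P. y \<in> set p}" for y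
    by (rule subsingleton_finite) (use assms(1) in blast)
  moreover have "finite (\<Union>y\<in>Y. {p\<in>P. y \<in> set p})" using assms(2) calculation(2) by blast
  ultimately show ?thesis using finite_subset by blast
qed

lemma gpath_ne: "gpath E p \<Longrightarrow> p \<noteq> []"
  unfolding gpath_def by simp

lemma sep:
  assumes "finite A" "\<forall>u v. E u v \<longrightarrow> u \<notin> A \<longrightarrow> v \<notin> A \<longrightarrow> \<kappa> u = \<kappa> v"
    "\<forall>n\<ge>N1. \<kappa> (Q1 n) = k1" "\<forall>n\<ge>N2. \<kappa> (Q2 n) = k2" "k1 \<noteq> k2"
  shows "\<not> ray_equiv E Q1 Q2"
proof
  assume "ray_equiv E Q1 Q2"
  then obtain P where P: "infinite P"
    "\<forall>p\<in>P. gpath E p \<and> hd p \<in> range Q1 \<and> last p \<in> range Q2"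
    "\<forall>p\<in>P. \<forall>q\<in>P. p \<noteq> q \<longrightarrow> set p \<inter> set q = {}"
    unfolding ray_equiv_def by blast
  define bad where "bad = {p\<in>P. set p \<inter> A \<noteq> {}} \<union> {p\<in>P. set p \<inter> Q1 ` {..<N1} \<noteq> {}}
     \<union> {p\<in>P. set p \<inter> Q2 ` {..<N2} \<noteq> {}}"
  have "finite bad" unfolding bad_def using fin_meet[OF P(3)] assms(1) by simp
  have "\<not> P \<subseteq> bad" using P(1) \<open>finite bad\<close> finite_subset by blast
  then obtain p where p: "p \<in> P" "p \<notin> bad" by blast
  have gp: "gpath E p" "hd p \<in> range Q1" "last p \<in> range Q2" using P(2) p(1) by auto
  have ne: "p \<noteq> []" using gpath_ne[OF gp(1)] .
  have hds: "hd p \<in> set p" "last p \<in> set p" using ne by auto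
  obtain m1 where m1: "hd p = Q1 m1" using gp(2) by blast
  obtain m2 where m2: "last p = Q2 m2" using gp(3) by blast
  have "m1 \<ge> N1"
  proof (rule ccontr)
    assume "\<not> m1 \<ge> N1"
    then have "hd p \<in> Q1 ` {..<N1}" using m1 by simp
    then show False using p hds unfolding bad_def by blast
  qed
  have "m2 \<ge> N2"
  proof (rule ccontr)
    assume "\<not> m2 \<ge> N2"
    then have "last p \<in> Q2 ` {..<N2}" using m2 by simp
    then show False using p hds unfolding bad_def by blast
  qed
  have "set p \<inter> A = {}" using p unfolding bad_def by blast
  from path_kappa[OF gp(1) this assms(2)] have "\<kappa> (hd p) = \<kappa> (last p)" by blast
  moreover have "\<kappa> (hd p) = k1" using assms(3) \<open>m1 \<ge> N1\<close> m1 by simp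
  moreover have "\<kappa> (last p) = k2" using assms(4) \<open>m2 \<ge> N2\<close> m2 by simp
  ultimately show False using assms(5) by simp
qed

primrec seqacc :: "('a set \<Rightarrow> 'a list) \<Rightarrow> nat \<Rightarrow> 'a list list" where
  "seqacc f 0 = []"
| "seqacc f (Suc n) = f (\<Union> (set ` set (seqacc f n))) # seqacc f n"

lemma equiv_intro:
  assumes "\<And>F. finite F \<Longrightarrow> \<exists>p. gpath E p \<and> hd p \<in> range Q1 \<and> last p \<in> range Q2 \<and> set p \<inter> F = {}"
  shows "ray_equiv E Q1 Q2"
proof -
  define good where "good F p \<longleftrightarrow> gpath E p \<and> hd p \<in> range Q1 \<and> last p \<in> range Q2 \<and> set p \<inter> F = {}" for F p
  define pick where "pick F = (SOME p. good F p)" for F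
  define U where "U n = \<Union> (set ` set (seqacc pick n))" for n
  define pth where "pth n = pick (U n)" for n
  have finU: "finite (U n)" for n unfolding U_def by simp
  have goodp: "good (U n) (pth n)" for n
    unfolding pth_def pick_def using assms[OF finU[of n]] unfolding good_def by (rule someI_ex)
  have mem: "m < n \<Longrightarrow> pth m \<in> set (seqacc pick n)" for m n
  proof (induction n)
    case 0 then show ?case by simp
  next
    case (Suc n)
    show ?case
    proof (cases "m = n")
      case True then show ?thesis unfolding pth_def U_def by simp
    next
      case False then show ?thesis using Suc by simp
    qed
  qed
  have sub: "m < n \<Longrightarrow> set (pth m) \<subseteq> U n" for m n
    using mem[of m n] unfolding U_def by blast
  have disj: "m < n \<Longrightarrow> set (pth m) \<inter> set (pth n) = {}" for m n
    using sub[of m n] goodp[of n] unfolding good_def by blast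
  have ne: "set (pth n) \<noteq> {}" for n using goodp[of n] gpath_ne unfolding good_def by auto
  have "inj pth"
  proof (rule injI)
    fix m n assume "pth m = pth n"
    show "m = n"
    proof (rule ccontr)
      assume "m \<noteq> n"
      then have "m < n \<or> n < m" by arith
      then show False
      proof
        assume "m < n" then show False using disj[of m n] ne[of n] \<open>pth m = pth n\<close> by simp
      next
        assume "n < m" then show False using disj[of n m] ne[of n] \<open>pth m = pth n\<close> by simp
      qed
    qed
  qed
  then have "infinite (range pth)" using finite_imageD[of pth UNIV] by auto
  moreover have "\<forall>p\<in>range pth. gpath E p \<and> hd p \<in> range Q1 \<and> last p \<in> range Q2"
    using goodp unfolding good_def by blast
  moreover have "\<forall>p\<in>range pth. \<forall>q\<in>range pth. p \<noteq> q \<longrightarrow> set p \<inter> set q = {}"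
  proof (intro ballI impI)
    fix p q assume "p \<in> range pth" "q \<in> range pth" "p \<noteq> q"
    then obtain m n where "p = pth m" "q = pth n" "m \<noteq> n" by blast
    then show "set p \<inter> set q = {}" using disj[of m n] disj[of n m] by (metis inf_commute nat_neq_iff)
  qed
  ultimately show ?thesis unfolding ray_equiv_def by blast
qed

lemma ray_refl:
  assumes "is_ray E Q"
  shows "ray_equiv E Q Q"
proof (rule equiv_intro)
  fix F :: "'a set" assume "finite F"
  obtain N where "\<forall>n\<ge>N. Q n \<notin> F" using tail_avoid assms \<open>finite F\<close> unfolding is_ray_def by blast
  then have "gpath E [Q N] \<and> hd [Q N] \<in> range Q \<and> last [Q N] \<in> range Q \<and> set [Q N] \<inter> F = {}"
    unfolding gpath_def by simp
  then show "\<exists>p. gpath E p \<and> hd p \<in> range Q \<and> last p \<in> range Q \<and> set p \<inter> F = {}" by blast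
qed


locale td = tree T for T :: "'t \<Rightarrow> 't \<Rightarrow> bool" +
  fixes E :: "'v \<Rightarrow> 'v \<Rightarrow> bool" and X :: "'t \<Rightarrow> 'v set"
  assumes gE: "graph E" and lf: "locally_finite E" and tdec: "tree_decomposition E T X"
    and bags: "\<forall>t. finite (X t) \<and> is_clique E (X t)" and ua: "unique_adhesion T X"
begin

definition S :: "'v \<Rightarrow> 't set" where "S v = {t. v \<in> X t}"

lemma Xfin: "finite (X t)" using bags by blast

lemma clique: "u \<in> X t \<Longrightarrow> w \<in> X t \<Longrightarrow> u \<noteq> w \<Longrightarrow> E u w"
  using bags unfolding is_clique_def by blast

lemma Esym: "E u w \<Longrightarrow> E w u" and Eirr: "\<not> E u u"
  using gE unfolding graph_def by blast+

lemma S_ne: "S v \<noteq> {}"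
proof -
  have "(\<Union>t. X t) = UNIV" using tdec unfolding tree_decomposition_def by blast
  then have "v \<in> (\<Union>t. X t)" by simp
  then show ?thesis unfolding S_def by blast
qed

lemma edge_bag: "E u w \<Longrightarrow> \<exists>b. u \<in> X b \<and> w \<in> X b"
  using tdec unfolding tree_decomposition_def by blast

lemma S_reach: "x \<in> S v \<Longrightarrow> y \<in> S v \<Longrightarrow> (\<lambda>a b. T a b \<and> a \<in> S v \<and> b \<in> S v)\<^sup>*\<^sup>* x y"
proof -
  assume xy: "x \<in> S v" "y \<in> S v"
  have "induces_connected T (S v)" using tdec unfolding tree_decomposition_def S_def by blast
  from induces_reach[OF this xy] show ?thesis .
qed

lemma S_finite: "finite (S v)"
proof -
  define N where "N = insert v {u. E v u}"
  have finN: "finite N" using lf unfolding N_def locally_finite_def by simp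
  have XN: "t \<in> S v \<Longrightarrow> X t \<subseteq> N" for t
    using clique unfolding S_def N_def by blast
  define Ed where "Ed = {(a, b). T a b \<and> a \<in> S v \<and> b \<in> S v}"
  have inner: "finite {(a, b). T a b \<and> a \<in> S v \<and> X a \<inter> X b = Y}" for Y
  proof (cases "{(a, b). T a b \<and> a \<in> S v \<and> X a \<inter> X b = Y} = {}")
    case True from True show ?thesis by (metis finite.emptyI)
  next
    case False
    then obtain a0 b0 where ab0: "T a0 b0" "X a0 \<inter> X b0 = Y" by blast
    have "{(a, b). T a b \<and> a \<in> S v \<and> X a \<inter> X b = Y} \<subseteq> {(a0, b0), (b0, a0)}"
    proof
      fix p assume "p \<in> {(a, b). T a b \<and> a \<in> S v \<and> X a \<inter> X b = Y}"
      then obtain a b where p: "p = (a, b)" "T a b" "X a \<inter> X b = Y" by blast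
      then have "{a, b} = {a0, b0}" using ua ab0 unfolding unique_adhesion_def by blast
      then have "(a = a0 \<and> b = b0) \<or> (a = b0 \<and> b = a0)" by (simp add: doubleton_eq_iff)
      then show "p \<in> {(a0, b0), (b0, a0)}" using p(1) by blast
    qed
    then show ?thesis using finite_subset by blast
  qed
  have "Ed \<subseteq> (\<Union>Y\<in>Pow N. {(a, b). T a b \<and> a \<in> S v \<and> X a \<inter> X b = Y})"
  proof
    fix p assume "p \<in> Ed"
    then obtain a b where p: "p = (a, b)" "T a b" "a \<in> S v" unfolding Ed_def by blast
    then have "X a \<inter> X b \<in> Pow N" using XN by blast
    then show "p \<in> (\<Union>Y\<in>Pow N. {(a, b). T a b \<and> a \<in> S v \<and> X a \<inter> X b = Y})" using p by blast
  qed
  moreover have "finite (\<Union>Y\<in>Pow N. {(a, b). T a b \<and> a \<in> S v \<and> X a \<inter> X b = Y})"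
    using finN by (intro finite_UN_I) (simp_all add: inner)
  ultimately have finEd: "finite Ed" using finite_subset by blast
  obtain t0 where t0: "t0 \<in> S v" using S_ne by blast
  have "S v \<subseteq> insert t0 (fst ` Ed)"
  proof
    fix x assume x: "x \<in> S v"
    show "x \<in> insert t0 (fst ` Ed)"
    proof (cases "x = t0")
      case True then show ?thesis by simp
    next
      case False
      from S_reach[OF x t0] show ?thesis
      proof (cases rule: converse_rtranclpE)
        case base then show ?thesis using False by simp
      next
        case (step y)
        then have "(x, y) \<in> Ed" unfolding Ed_def by simp
        then show ?thesis by (metis fst_conv image_eqI insertI2)
      qed
    qed
  qed
  then show ?thesis using finEd finite_subset by blast
qed

lemma side_stay:
  assumes "v \<notin> X t" "T t s" "x \<in> S v" "x \<in> Side s t"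
  shows "S v \<subseteq> Side s t"
proof
  fix y assume y: "y \<in> S v"
  from S_reach[OF assms(3) y] show "y \<in> Side s t"
  proof (induction rule: rtranclp_induct)
    case base then show ?case using assms(4) .
  next
    case (step z z')
    have "z \<noteq> t" "z' \<noteq> t" using step(2) assms(1) unfolding S_def by auto
    then have "{z, z'} \<noteq> {s, t}" by (simp add: doubleton_eq_iff)
    then have "Tm s t z z'" using step(2) unfolding Tm_def by simp
    then show ?case using step(3) unfolding Side_def by (simp add: rtranclp.rtrancl_into_rtrancl)
  qed
qed

lemma side_kappa:
  assumes "v \<notin> X t" "b \<in> S v" "T t s"
  shows "(S v \<inter> Side s t \<noteq> {}) = (b \<in> Side s t)"
proof
  assume "S v \<inter> Side s t \<noteq> {}"
  then obtain x where "x \<in> S v" "x \<in> Side s t" by blast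
  from side_stay[OF assms(1,3) this] show "b \<in> Side s t" using assms(2) by blast
next
  assume "b \<in> Side s t" then show "S v \<inter> Side s t \<noteq> {}" using assms(2) by blast
qed

lemma ray_step: "is_ray E Q \<Longrightarrow> \<forall>n. E (Q n) (Q (Suc n))"
  unfolding is_ray_def by blast

lemma ray_inj: "is_ray E Q \<Longrightarrow> inj Q"
  unfolding is_ray_def by blast

lemma side_tail:
  assumes "is_ray E Q"
  shows "\<exists>s N. T t s \<and> (\<forall>n\<ge>N. S (Q n) \<subseteq> Side s t)"
proof -
  obtain N where N: "\<forall>n\<ge>N. Q n \<notin> X t" using tail_avoid[OF ray_inj[OF assms] Xfin] by blast
  define \<kappa> where "\<kappa> v = {s. T t s \<and> S v \<inter> Side s t \<noteq> {}}" for v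
  have kc: "\<forall>u w. E u w \<longrightarrow> u \<notin> X t \<longrightarrow> w \<notin> X t \<longrightarrow> \<kappa> u = \<kappa> w"
  proof (intro allI impI)
    fix u w assume uw: "E u w" "u \<notin> X t" "w \<notin> X t"
    obtain b where b: "u \<in> X b" "w \<in> X b" using edge_bag[OF uw(1)] by blast
    then have bS: "b \<in> S u" "b \<in> S w" unfolding S_def by auto
    have "\<kappa> u = {s. T t s \<and> b \<in> Side s t}"
      unfolding \<kappa>_def
    proof (rule Collect_cong)
      fix s show "(T t s \<and> S u \<inter> Side s t \<noteq> {}) = (T t s \<and> b \<in> Side s t)"
      proof (cases "T t s")
        case True then show ?thesis using side_kappa[OF uw(2) bS(1) True] by simp
      next
        case False then show ?thesis by simp
      qed
    qed
    moreover have "\<kappa> w = {s. T t s \<and> b \<in> Side s t}"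
      unfolding \<kappa>_def
    proof (rule Collect_cong)
      fix s show "(T t s \<and> S w \<inter> Side s t \<noteq> {}) = (T t s \<and> b \<in> Side s t)"
      proof (cases "T t s")
        case True then show ?thesis using side_kappa[OF uw(3) bS(2) True] by simp
      next
        case False then show ?thesis by simp
      qed
    qed
    ultimately show "\<kappa> u = \<kappa> w" by simp
  qed
  have kN: "n \<ge> N \<Longrightarrow> \<kappa> (Q n) = \<kappa> (Q N)" for n
    using kappa_const[OF ray_step[OF assms] N kc] by blast
  obtain b where b: "b \<in> S (Q N)" using S_ne by blast
  have "b \<noteq> t" using b N unfolding S_def by auto
  then obtain s where s: "T t s" "b \<in> Side s t" using S5 by blast
  have "s \<in> \<kappa> (Q N)" unfolding \<kappa>_def using s b by blast
  have "\<forall>n\<ge>N. S (Q n) \<subseteq> Side s t"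
  proof (intro allI impI)
    fix n assume "N \<le> n"
    then have "\<kappa> (Q n) = \<kappa> (Q N)" by (rule kN)
    then have "s \<in> \<kappa> (Q n)" using \<open>s \<in> \<kappa> (Q N)\<close> by simp
    then obtain x where "x \<in> S (Q n)" "x \<in> Side s t" unfolding \<kappa>_def by blast
    moreover have "Q n \<notin> X t" using N \<open>N \<le> n\<close> by blast
    ultimately show "S (Q n) \<subseteq> Side s t" using side_stay[OF _ s(1)] by blast
  qed
  then show ?thesis using s(1) by blast
qed

lemma side_uniq:
  fixes Q :: "nat \<Rightarrow> 'v"
  assumes "T t s1" "T t s2" "\<forall>n\<ge>N1. S (Q n) \<subseteq> Side s1 t" "\<forall>n\<ge>N2. S (Q n) \<subseteq> Side s2 t"
  shows "s1 = s2"
proof (rule ccontr)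
  assume ne: "s1 \<noteq> s2"
  obtain x where "x \<in> S (Q (max N1 N2))" using S_ne by blast
  then have "x \<in> Side s1 t" "x \<in> Side s2 t"
    using assms(3)[rule_format, OF max.cobounded1] assms(4)[rule_format, OF max.cobounded2] by auto
  then show False using S34[OF assms(1,2) ne] by blast
qed

end


locale tdr = td T E X for T :: "'t \<Rightarrow> 't \<Rightarrow> bool" and E :: "'v \<Rightarrow> 'v \<Rightarrow> bool" and X +
  fixes R0 :: "nat \<Rightarrow> 'v"
  assumes R0: "is_ray E R0"
begin

definition evs :: "'t \<Rightarrow> 't \<Rightarrow> bool" where
  "evs s t \<longleftrightarrow> (\<exists>N. \<forall>n\<ge>N. S (R0 n) \<subseteq> Side s t)"

definition par :: "'t \<Rightarrow> 't" where
  "par t = (SOME s. T t s \<and> evs s t)"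

lemma par_spec: "T t (par t) \<and> evs (par t) t"
proof -
  have "\<exists>s. T t s \<and> evs s t" using side_tail[OF R0, of t] unfolding evs_def by blast
  then show ?thesis unfolding par_def by (rule someI_ex)
qed

lemma par_uniq: "T t s \<Longrightarrow> evs s t \<Longrightarrow> s = par t"
proof -
  assume a: "T t s" "evs s t"
  obtain N1 where N1: "\<forall>n\<ge>N1. S (R0 n) \<subseteq> Side s t" using a(2) unfolding evs_def by blast
  obtain N2 where N2: "\<forall>n\<ge>N2. S (R0 n) \<subseteq> Side (par t) t" using par_spec unfolding evs_def by blast
  show "s = par t" using side_uniq[OF a(1) _ N1 N2] par_spec by blast
qed

lemma T1: "T t s \<Longrightarrow> s = par t \<or> t = par s"
proof -
  assume ts: "T t s"
  show ?thesis
  proof (cases "s = par t")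
    case True then show ?thesis by simp
  next
    case False
    have sub: "Side (par t) t \<subseteq> Side t s" using S3[of t "par t" s] par_spec ts False by simp
    obtain N where N: "\<forall>n\<ge>N. S (R0 n) \<subseteq> Side (par t) t" using par_spec unfolding evs_def by blast
    have "evs t s" unfolding evs_def using N sub by blast
    then have "t = par s" using par_uniq Tsym[OF ts] by blast
    then show ?thesis by simp
  qed
qed

lemma parpar: "par (par t) \<noteq> t"
proof
  assume pp: "par (par t) = t"
  obtain N1 where N1: "\<forall>n\<ge>N1. S (R0 n) \<subseteq> Side (par t) t" using par_spec unfolding evs_def by blast
  obtain N2 where N2: "\<forall>n\<ge>N2. S (R0 n) \<subseteq> Side t (par t)"
    using par_spec[of "par t"] pp unfolding evs_def by auto
  obtain x where x: "x \<in> S (R0 (max N1 N2))" using S_ne by blast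
  have "x \<in> Side (par t) t" using N1[rule_format, OF max.cobounded1] x by blast
  moreover have "x \<in> Side t (par t)" using N2[rule_format, OF max.cobounded2] x by blast
  ultimately show False using S4[of t "par t"] par_spec by blast
qed

lemma Tpar: "T t (par t)" using par_spec by blast

lemma nested: "Side t (par t) \<subseteq> Side (par t) (par (par t))"
proof -
  have "T (par t) t" using Tsym[OF Tpar] .
  moreover have "T (par t) (par (par t))" by (rule Tpar)
  moreover have "t \<noteq> par (par t)" using parpar by metis
  ultimately show ?thesis using S3[of "par t" t "par (par t)"] by blast
qed

lemma nested_iter: "Side t (par t) \<subseteq> Side ((par ^^ n) t) (par ((par ^^ n) t))"
proof (induction n)
  case 0 then show ?case by simp
next
  case (Suc n)
  have "Side ((par ^^ n) t) (par ((par ^^ n) t)) \<subseteq> Side ((par ^^ Suc n) t) (par ((par ^^ Suc n) t))"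
    using nested[of "(par ^^ n) t"] by simp
  then show ?case using Suc by blast
qed

lemma T2: "n \<ge> 1 \<Longrightarrow> (par ^^ n) t \<noteq> t"
proof
  assume n: "n \<ge> 1" and eq: "(par ^^ n) t = t"
  obtain m where m: "n = Suc m" using n by (cases n) auto
  have e: "(par ^^ m) (par t) = t" using eq m by (simp add: funpow_swap1)
  have "par t \<in> Side (par t) (par (par t))" by (rule Side_refl)
  also have "\<dots> \<subseteq> Side ((par ^^ m) (par t)) (par ((par ^^ m) (par t)))" by (rule nested_iter)
  also have "\<dots> = Side t (par t)" using e by simp
  finally have "par t \<in> Side t (par t)" .
  then show False using S1'(1)[OF Tpar] by blast
qed

lemma noper: "(par ^^ a) x = (par ^^ b) x \<Longrightarrow> a = b"
proof (rule ccontr)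
  assume eq: "(par ^^ a) x = (par ^^ b) x" and ne: "a \<noteq> b"
  have gen: "(par ^^ i) x = (par ^^ j) x \<Longrightarrow> i < j \<Longrightarrow> False" for i j
  proof -
    assume e: "(par ^^ i) x = (par ^^ j) x" and lt: "i < j"
    have "(par ^^ (j - i)) ((par ^^ i) x) = (par ^^ j) x"
      using lt by (simp add: funpow_add[symmetric, THEN fun_cong, simplified])
    then have "(par ^^ (j - i)) ((par ^^ i) x) = (par ^^ i) x" using e by simp
    moreover have "j - i \<ge> 1" using lt by simp
    ultimately show False using T2 by blast
  qed
  show False
  proof (cases "a < b")
    case True then show False using gen[OF eq] by blast
  next
    case False then have "b < a" using ne by simp
    then show False using gen[OF eq[symmetric]] by blast
  qed
qed

lemma merge: "\<exists>m n. (par ^^ m) x = (par ^^ n) y"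
proof -
  have "T\<^sup>*\<^sup>* x y" by (rule Treach)
  then show ?thesis
  proof (induction rule: rtranclp_induct)
    case base
    have "(par ^^ 0) x = (par ^^ 0) x" by simp
    then show ?case by blast
  next
    case (step y z)
    then obtain m n where mn: "(par ^^ m) x = (par ^^ n) y" by blast
    from T1[OF step(2)] show ?case
    proof
      assume z: "z = par y"
      show ?case
      proof (cases n)
        case 0
        then have "(par ^^ Suc m) x = z" using mn z by simp
        then have "(par ^^ Suc m) x = (par ^^ 0) z" by simp
        then show ?thesis by blast
      next
        case (Suc k)
        then have "(par ^^ m) x = (par ^^ k) z" using mn z by (simp add: funpow_swap1)
        then show ?thesis by blast
      qed
    next
      assume y: "y = par z"
      then have "(par ^^ m) x = (par ^^ Suc n) z" using mn by (simp add: funpow_swap1)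
      then show ?case by blast
    qed
  qed
qed

definition Desc :: "'t \<Rightarrow> 't set" where "Desc t = {s. \<exists>n. (par ^^ n) s = t}"

lemma Desc_refl: "t \<in> Desc t"
proof -
  have "(par ^^ 0) t = t" by simp
  then show ?thesis unfolding Desc_def by blast
qed

lemma Desc_mono: "Desc t \<subseteq> Desc (par t)"
proof
  fix s assume "s \<in> Desc t"
  then obtain n where "(par ^^ n) s = t" unfolding Desc_def by blast
  then have "(par ^^ Suc n) s = par t" by simp
  then show "s \<in> Desc (par t)" unfolding Desc_def by blast
qed

lemma Desc_mono_iter: "Desc t \<subseteq> Desc ((par ^^ m) t)"
proof (induction m)
  case 0 then show ?case by simp
next
  case (Suc m) then show ?case using Desc_mono[of "(par ^^ m) t"] by simp
qed

lemma par_notin: "par t \<notin> Desc t"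
proof
  assume "par t \<in> Desc t"
  then obtain n where "(par ^^ n) (par t) = t" unfolding Desc_def by blast
  then have "(par ^^ Suc n) t = t" by (simp add: funpow_swap1)
  then show False using T2[of "Suc n"] by simp
qed

lemma Desc_edge:
  assumes "T x y" "x \<in> Desc t" "y \<notin> Desc t"
  shows "x = t \<and> y = par t"
proof -
  obtain n where n: "(par ^^ n) x = t" using assms(2) unfolding Desc_def by blast
  from T1[OF assms(1)] show ?thesis
  proof
    assume y: "y = par x"
    show ?thesis
    proof (cases n)
      case 0 then show ?thesis using n y by simp
    next
      case (Suc k)
      then have "(par ^^ k) y = t" using n y by (simp add: funpow_swap1)
      then have "y \<in> Desc t" unfolding Desc_def by blast
      then show ?thesis using assms(3) by blast
    qed
  next
    assume x: "x = par y"
    then have "(par ^^ Suc n) y = t" using n by (simp add: funpow_swap1)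
    then have "y \<in> Desc t" unfolding Desc_def by blast
    then show ?thesis using assms(3) by blast
  qed
qed

definition A :: "'t \<Rightarrow> 'v set" where "A t = X t \<inter> X (par t)"

lemma Afin: "finite (A t)" unfolding A_def using Xfin by blast

lemma cross:
  assumes "v \<notin> A t" "x \<in> S v" "x \<in> Desc t"
  shows "S v \<subseteq> Desc t"
proof
  fix y assume y: "y \<in> S v"
  from S_reach[OF assms(2) y] show "y \<in> Desc t"
  proof (induction rule: rtranclp_induct)
    case base then show ?case using assms(3) .
  next
    case (step z z')
    show ?case
    proof (rule ccontr)
      assume "z' \<notin> Desc t"
      then have "z = t \<and> z' = par t" using Desc_edge step(2,3) by blast
      then have "v \<in> A t" using step(2) unfolding A_def S_def by auto
      then show False using assms(1) by blast
    qed
  qed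
qed

definition VB :: "'t \<Rightarrow> 'v set" where "VB t = {v. S v \<subseteq> Desc t}"
definition VO :: "'t \<Rightarrow> 'v set" where "VO t = {v. S v \<inter> Desc t = {}}"

lemma part: "v \<notin> A t \<Longrightarrow> v \<in> VB t \<or> v \<in> VO t"
  unfolding VB_def VO_def using cross by blast

lemma A_notVB: "v \<in> A t \<Longrightarrow> v \<notin> VB t"
  unfolding A_def VB_def S_def using par_notin by blast

lemma A_notVO: "v \<in> A t \<Longrightarrow> v \<notin> VO t"
  unfolding A_def VO_def S_def using Desc_refl by blast

lemma VB_VO: "v \<in> VB t \<Longrightarrow> v \<notin> VO t"
  unfolding VB_def VO_def using S_ne by blast

lemma desc_kappa:
  "\<forall>u w. E u w \<longrightarrow> u \<notin> A t \<longrightarrow> w \<notin> A t \<longrightarrow> (S u \<subseteq> Desc t) = (S w \<subseteq> Desc t)"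
proof (intro allI impI)
  fix u w assume uw: "E u w" "u \<notin> A t" "w \<notin> A t"
  obtain b where b: "u \<in> X b" "w \<in> X b" using edge_bag[OF uw(1)] by blast
  then have bS: "b \<in> S u" "b \<in> S w" unfolding S_def by auto
  show "(S u \<subseteq> Desc t) = (S w \<subseteq> Desc t)"
  proof
    assume "S u \<subseteq> Desc t"
    then have "b \<in> Desc t" using bS by blast
    then show "S w \<subseteq> Desc t" using cross[OF uw(3) bS(2)] by blast
  next
    assume "S w \<subseteq> Desc t"
    then have "b \<in> Desc t" using bS by blast
    then show "S u \<subseteq> Desc t" using cross[OF uw(2) bS(1)] by blast
  qed
qed

definition below :: "(nat \<Rightarrow> 'v) \<Rightarrow> 't \<Rightarrow> bool" where
  "below Q t \<longleftrightarrow> (\<exists>N. \<forall>n\<ge>N. Q n \<in> VB t)"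

lemma dich:
  assumes "is_ray E Q" "\<not> below Q t"
  shows "\<exists>N. \<forall>n\<ge>N. Q n \<in> VO t"
proof -
  obtain N where N: "\<forall>n\<ge>N. Q n \<notin> A t" using tail_avoid[OF ray_inj[OF assms(1)] Afin] by blast
  have kN: "n \<ge> N \<Longrightarrow> (S (Q n) \<subseteq> Desc t) = (S (Q N) \<subseteq> Desc t)" for n
    using kappa_const[OF ray_step[OF assms(1)] N desc_kappa] by blast
  have "\<not> (S (Q N) \<subseteq> Desc t)"
  proof
    assume "S (Q N) \<subseteq> Desc t"
    then have "\<forall>n\<ge>N. Q n \<in> VB t" unfolding VB_def using kN by blast
    then show False using assms(2) unfolding below_def by blast
  qed
  then have "\<forall>n\<ge>N. Q n \<notin> VB t" unfolding VB_def using kN by blast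
  then have "\<forall>n\<ge>N. Q n \<in> VO t" using part N by blast
  then show ?thesis by blast
qed

lemma neq_sep:
  assumes "is_ray E Q1" "is_ray E Q2" "below Q1 t" "\<not> below Q2 t"
  shows "\<not> ray_equiv E Q1 Q2 \<and> \<not> ray_equiv E Q2 Q1"
proof -
  obtain N1 where N1: "\<forall>n\<ge>N1. Q1 n \<in> VB t" using assms(3) unfolding below_def by blast
  obtain N2 where N2: "\<forall>n\<ge>N2. Q2 n \<in> VO t" using dich[OF assms(2,4)] by blast
  have k1: "\<forall>n\<ge>N1. (S (Q1 n) \<subseteq> Desc t) = True" using N1 unfolding VB_def by simp
  have k2: "\<forall>n\<ge>N2. (S (Q2 n) \<subseteq> Desc t) = False"
    using N2 VB_VO unfolding VB_def VO_def using S_ne by blast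
  have "\<not> ray_equiv E Q1 Q2"
    using sep[of "A t" E "\<lambda>v. S v \<subseteq> Desc t", OF Afin desc_kappa k1 k2] by simp
  moreover have "\<not> ray_equiv E Q2 Q1"
    using sep[of "A t" E "\<lambda>v. S v \<subseteq> Desc t", OF Afin desc_kappa k2 k1] by simp
  ultimately show ?thesis by blast
qed

end


context tdr
begin

lemma B1: "below Q t \<Longrightarrow> below Q (par t)"
  unfolding below_def VB_def using Desc_mono by blast

lemma B1_iter: "below Q t \<Longrightarrow> below Q ((par ^^ k) t)"
  unfolding below_def VB_def using Desc_mono_iter by blast

lemma child_of: "b \<in> Desc d \<Longrightarrow> b \<noteq> d \<Longrightarrow> \<exists>c. par c = d \<and> b \<in> Desc c"
proof -
  assume b: "b \<in> Desc d" "b \<noteq> d"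
  then obtain k where k: "(par ^^ k) b = d" unfolding Desc_def by blast
  then obtain j where j: "k = Suc j" using b(2) by (cases k) auto
  have "par ((par ^^ j) b) = d" using k j by simp
  moreover have "b \<in> Desc ((par ^^ j) b)" unfolding Desc_def by blast
  ultimately show ?thesis by blast
qed

lemma B2:
  assumes "is_ray E Q" "below Q d"
  shows "\<exists>c. par c = d \<and> below Q c"
proof -
  obtain N1 where N1: "\<forall>n\<ge>N1. Q n \<in> VB d" using assms(2) unfolding below_def by blast
  obtain N2 where N2: "\<forall>n\<ge>N2. Q n \<notin> X d" using tail_avoid[OF ray_inj[OF assms(1)] Xfin] by blast
  define N where "N = max N1 N2"
  have NX: "\<forall>n\<ge>N. Q n \<notin> X d" using N2 unfolding N_def by simp
  have NB: "\<forall>n\<ge>N. Q n \<in> VB d" using N1 unfolding N_def by simp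
  define \<kappa> where "\<kappa> v = {c. par c = d \<and> S v \<inter> Desc c \<noteq> {}}" for v
  have hk: "(S u \<inter> Desc c \<noteq> {}) = (b \<in> Desc c)" if "u \<notin> X d" "b \<in> S u" "par c = d" for u b c
  proof
    assume "S u \<inter> Desc c \<noteq> {}"
    then obtain x where x: "x \<in> S u" "x \<in> Desc c" by blast
    have "u \<notin> A c" using that(1,3) unfolding A_def by blast
    from cross[OF this x] show "b \<in> Desc c" using that(2) by blast
  next
    assume "b \<in> Desc c" then show "S u \<inter> Desc c \<noteq> {}" using that(2) by blast
  qed
  have kc: "\<forall>u w. E u w \<longrightarrow> u \<notin> X d \<longrightarrow> w \<notin> X d \<longrightarrow> \<kappa> u = \<kappa> w"
  proof (intro allI impI)
    fix u w assume uw: "E u w" "u \<notin> X d" "w \<notin> X d"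
    obtain b where b: "u \<in> X b" "w \<in> X b" using edge_bag[OF uw(1)] by blast
    then have bS: "b \<in> S u" "b \<in> S w" unfolding S_def by auto
    have "\<kappa> u = {c. par c = d \<and> b \<in> Desc c}"
      unfolding \<kappa>_def
    proof (rule Collect_cong)
      fix c show "(par c = d \<and> S u \<inter> Desc c \<noteq> {}) = (par c = d \<and> b \<in> Desc c)"
        using hk[OF uw(2) bS(1), of c] by blast
    qed
    moreover have "\<kappa> w = {c. par c = d \<and> b \<in> Desc c}"
      unfolding \<kappa>_def
    proof (rule Collect_cong)
      fix c show "(par c = d \<and> S w \<inter> Desc c \<noteq> {}) = (par c = d \<and> b \<in> Desc c)"
        using hk[OF uw(3) bS(2), of c] by blast
    qed
    ultimately show "\<kappa> u = \<kappa> w" by simp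
  qed
  have kN: "n \<ge> N \<Longrightarrow> \<kappa> (Q n) = \<kappa> (Q N)" for n
    using kappa_const[OF ray_step[OF assms(1)] NX kc] by blast
  obtain b where b: "b \<in> S (Q N)" using S_ne by blast
  have "b \<in> Desc d" using b NB unfolding VB_def by blast
  moreover have "b \<noteq> d" using b NX unfolding S_def by auto
  ultimately obtain c where c: "par c = d" "b \<in> Desc c" using child_of by blast
  have cN: "c \<in> \<kappa> (Q N)" unfolding \<kappa>_def using c b by blast
  have "\<forall>n\<ge>N. Q n \<in> VB c"
  proof (intro allI impI)
    fix n assume "N \<le> n"
    then have "\<kappa> (Q n) = \<kappa> (Q N)" by (rule kN)
    then have "c \<in> \<kappa> (Q n)" using cN by simp
    then obtain x where x: "x \<in> S (Q n)" "x \<in> Desc c" unfolding \<kappa>_def by blast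
    have "Q n \<notin> A c" using NX \<open>N \<le> n\<close> c(1) unfolding A_def by blast
    from cross[OF this x] show "Q n \<in> VB c" by (simp add: VB_def)
  qed
  then show ?thesis using c(1) unfolding below_def by blast
qed

lemma B3: "below Q t \<Longrightarrow> below Q t' \<Longrightarrow> Desc t \<inter> Desc t' \<noteq> {}"
proof -
  assume "below Q t" "below Q t'"
  then obtain N1 N2 where N: "\<forall>n\<ge>N1. Q n \<in> VB t" "\<forall>n\<ge>N2. Q n \<in> VB t'" unfolding below_def by blast
  obtain x where x: "x \<in> S (Q (max N1 N2))" using S_ne by blast
  have "x \<in> Desc t" using N(1)[rule_format, OF max.cobounded1] x unfolding VB_def by blast
  moreover have "x \<in> Desc t'" using N(2)[rule_format, OF max.cobounded2] x unfolding VB_def by blast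
  ultimately show ?thesis by blast
qed

lemma B4: "below Q u \<Longrightarrow> X u \<noteq> {}"
proof
  assume b: "below Q u" and Xu: "X u = {}"
  then obtain N where N: "\<forall>n\<ge>N. Q n \<in> VB u" unfolding below_def by blast
  obtain b where b: "b \<in> S (Q N)" using S_ne by blast
  have "b \<in> Desc u" using b N unfolding VB_def by blast
  moreover have "b \<noteq> u" using b Xu unfolding S_def by auto
  ultimately obtain c where c: "par c = u" "b \<in> Desc c" using child_of by blast
  have Tc: "T c u" using Tpar[of c] c(1) by simp
  have "X c \<inter> X u = X u \<inter> X (par u)" using Xu by simp
  then have "{c, u} = {u, par u}"
    using ua[unfolded unique_adhesion_def, rule_format, of c u u "par u"] Tc Tpar[of u] by blast
  moreover have "c \<noteq> u" using Tc Tirr by metis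
  ultimately have "c = par u" by (simp add: doubleton_eq_iff)
  then have "par (par u) = u" using c(1) by simp
  then show False using parpar by blast
qed

lemma same_level:
  assumes "(par ^^ d) w = a" "(par ^^ d) t = a" "w \<noteq> t"
  shows "Desc w \<inter> Desc t = {}"
proof (rule ccontr)
  assume "Desc w \<inter> Desc t \<noteq> {}"
  then obtain s p q where pq: "(par ^^ p) s = w" "(par ^^ q) s = t" unfolding Desc_def by blast
  have "(par ^^ (d + p)) s = a" using pq(1) assms(1) by (simp add: funpow_add)
  moreover have "(par ^^ (d + q)) s = a" using pq(2) assms(2) by (simp add: funpow_add)
  ultimately have "(par ^^ (d + p)) s = (par ^^ (d + q)) s" by simp
  then have "d + p = d + q" by (rule noper)
  then have "p = q" by simp
  then show False using pq assms(3) by simp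
qed

lemma anc: "finite NS \<Longrightarrow> \<exists>t. NS \<subseteq> Desc t"
proof (induction rule: finite_induct)
  case empty then show ?case by blast
next
  case (insert x F)
  then obtain t where t: "F \<subseteq> Desc t" by blast
  obtain m n where mn: "(par ^^ m) t = (par ^^ n) x" using merge by blast
  have "F \<subseteq> Desc ((par ^^ m) t)" using t Desc_mono_iter by blast
  moreover have "x \<in> Desc ((par ^^ m) t)" using mn[symmetric] unfolding Desc_def by blast
  ultimately show ?case by blast
qed

lemma meetA:
  assumes "is_ray E Q" "(S (Q 0) \<subseteq> Desc t) \<noteq> (S (Q m) \<subseteq> Desc t)"
  shows "\<exists>j. Q j \<in> A t"
  using kappa_change[OF ray_step[OF assms(1)] desc_kappa[of t] assms(2)] .

lemma cross_path:
  assumes "Q1 j1 \<in> A t" "Q2 j2 \<in> A t" "A t \<inter> F = {}"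
  shows "\<exists>p. gpath E p \<and> hd p \<in> range Q1 \<and> last p \<in> range Q2 \<and> set p \<inter> F = {}"
proof (cases "Q1 j1 = Q2 j2")
  case True
  have "gpath E [Q1 j1]" unfolding gpath_def by simp
  moreover have "hd [Q1 j1] \<in> range Q1" by simp
  moreover have "last [Q1 j1] \<in> range Q2" using True by (metis last_ConsL rangeI)
  moreover have "set [Q1 j1] \<inter> F = {}" using assms(1,3) by auto
  ultimately show ?thesis by blast
next
  case False
  have "E (Q1 j1) (Q2 j2)" using clique assms(1,2) False unfolding A_def by blast
  then have "\<forall>i. Suc i < length [Q1 j1, Q2 j2] \<longrightarrow> E ([Q1 j1, Q2 j2] ! i) ([Q1 j1, Q2 j2] ! Suc i)"
    by (simp add: less_Suc_eq)
  then have "gpath E [Q1 j1, Q2 j2]" unfolding gpath_def using False by simp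
  moreover have "hd [Q1 j1, Q2 j2] \<in> range Q1" "last [Q1 j1, Q2 j2] \<in> range Q2" by auto
  moreover have "set [Q1 j1, Q2 j2] \<inter> F = {}" using assms by auto
  ultimately show ?thesis by blast
qed

end


context tdr
begin

lemma eq_equiv:
  assumes Q1: "is_ray E Q1" and Q2: "is_ray E Q2" and eqb: "\<forall>t. below Q1 t = below Q2 t"
  shows "ray_equiv E Q1 Q2"
proof (rule equiv_intro)
  fix F :: "'v set" assume finF: "finite F"
  define W where "W = F \<union> {Q1 0, Q2 0}"
  define NS where "NS = \<Union> (S ` W)"
  have finNS: "finite NS" unfolding NS_def W_def using finF S_finite by simp
  have WNS: "v \<in> W \<Longrightarrow> S v \<subseteq> NS" for v unfolding NS_def by blast
  show "\<exists>p. gpath E p \<and> hd p \<in> range Q1 \<and> last p \<in> range Q2 \<and> set p \<inter> F = {}"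
  proof (cases "\<exists>t0. below Q1 t0")
    case True
    then obtain t0 where t0: "below Q1 t0" by blast
    define f where "f d = (SOME c. par c = d \<and> below Q1 c)" for d
    define ch where "ch k = (f ^^ k) t0" for k
    have fprop: "below Q1 d \<Longrightarrow> par (f d) = d \<and> below Q1 (f d)" for d
    proof -
      assume "below Q1 d"
      then have "\<exists>c. par c = d \<and> below Q1 c" using B2[OF Q1] by blast
      then show ?thesis unfolding f_def by (rule someI_ex)
    qed
    have chb: "below Q1 (ch k)" for k
    proof (induction k)
      case 0 then show ?case using t0 unfolding ch_def by simp
    next
      case (Suc k)
      have "ch (Suc k) = f (ch k)" unfolding ch_def by simp
      then show ?case using fprop[OF Suc] by simp
    qed
    have chp: "par (ch (Suc k)) = ch k" for k
    proof -
      have "ch (Suc k) = f (ch k)" unfolding ch_def by simp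
      then show ?thesis using fprop[OF chb[of k]] by simp
    qed
    have chanc: "(par ^^ k) (ch k) = t0" for k
    proof (induction k)
      case 0 then show ?case unfolding ch_def by simp
    next
      case (Suc k)
      have "(par ^^ Suc k) (ch (Suc k)) = (par ^^ k) (par (ch (Suc k)))" by (simp add: funpow_swap1)
      also have "\<dots> = (par ^^ k) (ch k)" using chp by simp
      finally show ?case using Suc by simp
    qed
    have Ddec: "j \<ge> k \<Longrightarrow> Desc (ch j) \<subseteq> Desc (ch k)" for j k
    proof (induction j rule: dec_induct)
      case base then show ?case by simp
    next
      case (step j)
      have "Desc (ch (Suc j)) \<subseteq> Desc (par (ch (Suc j)))" by (rule Desc_mono)
      then show ?case using chp step(3) by simp
    qed
    have escape: "\<exists>k. s \<notin> Desc (ch k)" for s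
    proof (rule ccontr)
      assume "\<not> (\<exists>k. s \<notin> Desc (ch k))"
      then have all: "\<forall>k. s \<in> Desc (ch k)" by blast
      obtain n0 where n0: "(par ^^ n0) s = ch 0" using all unfolding Desc_def by blast
      obtain nk where nk: "(par ^^ nk) s = ch (Suc n0)" using all unfolding Desc_def by blast
      have "(par ^^ (Suc n0 + nk)) s = (par ^^ Suc n0) (ch (Suc n0))"
        using nk by (simp add: funpow_add)
      also have "\<dots> = t0" by (rule chanc)
      also have "\<dots> = (par ^^ n0) s" using n0 unfolding ch_def by simp
      finally have "Suc n0 + nk = n0" by (rule noper)
      then show False by simp
    qed
    have escfin: "finite M \<Longrightarrow> \<exists>k. \<forall>s\<in>M. \<forall>j\<ge>k. s \<notin> Desc (ch j)" for M
    proof (induction rule: finite_induct)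
      case empty then show ?case by blast
    next
      case (insert x M)
      then obtain k1 where k1: "\<forall>s\<in>M. \<forall>j\<ge>k1. s \<notin> Desc (ch j)" by blast
      obtain k2 where k2: "x \<notin> Desc (ch k2)" using escape by blast
      have "\<forall>j\<ge>k2. x \<notin> Desc (ch j)" using k2 Ddec by blast
      then have "\<forall>s\<in>insert x M. \<forall>j\<ge>max k1 k2. s \<notin> Desc (ch j)" using k1 by auto
      then show ?case by blast
    qed
    obtain k where k: "\<forall>s\<in>NS. s \<notin> Desc (ch k)" using escfin[OF finNS] by blast
    define d where "d = ch k"
    have WVO: "v \<in> W \<Longrightarrow> v \<in> VO d" for v using WNS k unfolding VO_def d_def by blast
    have AF: "A d \<inter> F = {}" using WVO A_notVO unfolding W_def by blast
    have meet: "\<exists>j. Q j \<in> A d" if Q: "is_ray E Q" and bQ: "below Q d" and Q0: "Q 0 \<in> VO d" for Q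
    proof -
      obtain N where N: "\<forall>n\<ge>N. Q n \<in> VB d" using bQ unfolding below_def by blast
      have "S (Q N) \<subseteq> Desc d" using N unfolding VB_def by blast
      moreover have "\<not> S (Q 0) \<subseteq> Desc d" using Q0 S_ne unfolding VO_def by blast
      ultimately show ?thesis using meetA[OF Q, of d N] by blast
    qed
    have b1: "below Q1 d" using chb unfolding d_def by blast
    have b2: "below Q2 d" using b1 eqb by blast
    obtain j1 where j1: "Q1 j1 \<in> A d" using meet[OF Q1 b1] WVO unfolding W_def by blast
    obtain j2 where j2: "Q2 j2 \<in> A d" using meet[OF Q2 b2] WVO unfolding W_def by blast
    show ?thesis using cross_path[of Q1 j1 d Q2 j2 F, OF j1 j2 AF] .
  next
    case False
    then have nb1: "\<forall>t. \<not> below Q1 t" by blast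
    then have nb2: "\<forall>t. \<not> below Q2 t" using eqb by blast
    obtain d where d: "NS \<subseteq> Desc d" using anc[OF finNS] by blast
    have WVB: "v \<in> W \<Longrightarrow> v \<in> VB d" for v using WNS d unfolding VB_def by blast
    have AF: "A d \<inter> F = {}" using WVB A_notVB unfolding W_def by blast
    have meet: "\<exists>j. Q j \<in> A d" if Q: "is_ray E Q" and bQ: "\<not> below Q d" and Q0: "Q 0 \<in> VB d" for Q
    proof -
      obtain N where N: "\<forall>n\<ge>N. Q n \<in> VO d" using dich[OF Q bQ] by blast
      have "\<not> S (Q N) \<subseteq> Desc d" using N S_ne unfolding VO_def by blast
      moreover have "S (Q 0) \<subseteq> Desc d" using Q0 unfolding VB_def by blast
      ultimately show ?thesis using meetA[OF Q, of d N] by blast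
    qed
    obtain j1 where j1: "Q1 j1 \<in> A d" using meet[OF Q1] nb1 WVB unfolding W_def by blast
    obtain j2 where j2: "Q2 j2 \<in> A d" using meet[OF Q2] nb2 WVB unfolding W_def by blast
    show ?thesis using cross_path[of Q1 j1 d Q2 j2 F, OF j1 j2 AF] .
  qed
qed

lemma equiv_iff:
  assumes "is_ray E Q1" "is_ray E Q2"
  shows "ray_equiv E Q1 Q2 \<longleftrightarrow> below Q1 = below Q2"
proof
  assume "below Q1 = below Q2"
  then show "ray_equiv E Q1 Q2" using eq_equiv[OF assms] by simp
next
  assume eqv: "ray_equiv E Q1 Q2"
  show "below Q1 = below Q2"
  proof (rule ext, rule ccontr)
    fix t assume ne: "below Q1 t \<noteq> below Q2 t"
    show False
    proof (cases "below Q1 t")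
      case True
      then have "\<not> below Q2 t" using ne by simp
      then show False using neq_sep[OF assms True] eqv by blast
    next
      case False
      then have "below Q2 t" using ne by simp
      then show False using neq_sep[OF assms(2,1) _ False] eqv by blast
    qed
  qed
qed

end


context tdr
begin

lemma count:
  assumes bound: "\<And>n a. finite {t. (par ^^ n) t = a \<and> X t \<noteq> {}} \<and> card {t. (par ^^ n) t = a \<and> X t \<noteq> {}} \<le> M"
  shows "finite {below Q | Q. is_ray E Q}"
proof (rule ccontr)
  assume inf: "infinite {below Q | Q. is_ray E Q}"
  obtain C where C: "finite C" "card C = M + 2" "C \<subseteq> {below Q | Q. is_ray E Q}"
    using infinite_arbitrarily_large[OF inf] by blast
  have PB1: "\<beta> \<in> C \<Longrightarrow> \<beta> t \<Longrightarrow> \<beta> ((par ^^ k) t)" for \<beta> t k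
    using C(3) B1_iter by blast
  have PB2: "\<beta> \<in> C \<Longrightarrow> \<beta> t \<Longrightarrow> \<exists>c. par c = t \<and> \<beta> c" for \<beta> t
    using C(3) B2 by blast
  have PB3: "\<beta> \<in> C \<Longrightarrow> \<beta> t \<Longrightarrow> \<beta> t' \<Longrightarrow> Desc t \<inter> Desc t' \<noteq> {}" for \<beta> t t'
    using C(3) B3 by blast
  have PB4: "\<beta> \<in> C \<Longrightarrow> \<beta> t \<Longrightarrow> X t \<noteq> {}" for \<beta> t
    using C(3) B4 by blast
  define sp where "sp \<beta> \<gamma> = (SOME t. \<beta> t \<noteq> \<gamma> t)" for \<beta> \<gamma> :: "'t \<Rightarrow> bool"
  have spp: "\<beta> \<noteq> \<gamma> \<Longrightarrow> \<beta> (sp \<beta> \<gamma>) \<noteq> \<gamma> (sp \<beta> \<gamma>)" for \<beta> \<gamma>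
  proof -
    assume "\<beta> \<noteq> \<gamma>"
    then have "\<exists>t. \<beta> t \<noteq> \<gamma> t" by (simp add: fun_eq_iff)
    then show ?thesis unfolding sp_def by (rule someI_ex)
  qed
  define NS where "NS = (\<lambda>(\<beta>, \<gamma>). sp \<beta> \<gamma>) ` (C \<times> C)"
  have finNS: "finite NS" unfolding NS_def using C(1) by simp
  have spNS: "\<beta> \<in> C \<Longrightarrow> \<gamma> \<in> C \<Longrightarrow> sp \<beta> \<gamma> \<in> NS" for \<beta> \<gamma>
    unfolding NS_def by force
  obtain a where a: "NS \<subseteq> Desc a" using anc[OF finNS] by blast
  define dep where "dep x = (SOME k. (par ^^ k) x = a)" for x
  have depp: "x \<in> NS \<Longrightarrow> (par ^^ dep x) x = a" for x
  proof -
    assume "x \<in> NS"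
    then have "\<exists>k. (par ^^ k) x = a" using a unfolding Desc_def by blast
    then show ?thesis unfolding dep_def by (rule someI_ex)
  qed
  define n where "n = Max (dep ` NS)"
  have depn: "x \<in> NS \<Longrightarrow> dep x \<le> n" for x
    unfolding n_def using finNS by simp
  define C' where "C' = {\<beta> \<in> C. \<beta> a}"
  have C'sub: "C' \<subseteq> C" unfolding C'_def by blast
  have "\<forall>\<beta>\<in>C - C'. \<forall>\<gamma>\<in>C - C'. \<beta> = \<gamma>"
  proof (intro ballI, rule ccontr)
    fix \<beta> \<gamma> assume b: "\<beta> \<in> C - C'" and g: "\<gamma> \<in> C - C'" and ne: "\<beta> \<noteq> \<gamma>"
    define t where "t = sp \<beta> \<gamma>"
    have tN: "t \<in> NS" using spNS b g unfolding t_def by blast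
    have "\<beta> t \<noteq> \<gamma> t" using spp[OF ne] unfolding t_def .
    then have "\<beta> t \<or> \<gamma> t" by blast
    then show False
    proof
      assume "\<beta> t"
      then have "\<beta> ((par ^^ dep t) t)" using PB1 b by blast
      then have "\<beta> a" using depp[OF tN] by simp
      then show False using b unfolding C'_def by blast
    next
      assume "\<gamma> t"
      then have "\<gamma> ((par ^^ dep t) t)" using PB1 g by blast
      then have "\<gamma> a" using depp[OF tN] by simp
      then show False using g unfolding C'_def by blast
    qed
  qed
  then have "card (C - C') \<le> Suc 0" using card_le_Suc0_iff_eq C(1) by blast
  moreover have "card (C - C') = card C - card C'"
    using card_Diff_subset[OF finite_subset[OF C'sub C(1)] C'sub] .
  ultimately have cardC': "card C' \<ge> M + 1" using C(2) by simp
  have iter: "\<beta> \<in> C \<Longrightarrow> \<beta> a \<Longrightarrow> \<exists>w. (par ^^ m) w = a \<and> \<beta> w" for \<beta> m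
  proof (induction m)
    case 0 then show ?case by simp
  next
    case (Suc m)
    then obtain w where w: "(par ^^ m) w = a" "\<beta> w" by blast
    obtain c where c: "par c = w" "\<beta> c" using PB2[OF Suc(2) w(2)] by blast
    have "(par ^^ Suc m) c = a" using w(1) c(1) by (simp add: funpow_swap1)
    then show ?case using c(2) by blast
  qed
  define u where "u \<beta> = (SOME w. (par ^^ n) w = a \<and> \<beta> w)" for \<beta>
  have up: "\<beta> \<in> C' \<Longrightarrow> (par ^^ n) (u \<beta>) = a \<and> \<beta> (u \<beta>)" for \<beta>
  proof -
    assume "\<beta> \<in> C'"
    then have "\<exists>w. (par ^^ n) w = a \<and> \<beta> w" using iter unfolding C'_def by blast
    then show ?thesis unfolding u_def by (rule someI_ex)
  qed
  have "inj_on u C'"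
  proof (rule inj_onI, rule ccontr)
    fix \<beta> \<gamma> assume b: "\<beta> \<in> C'" and g: "\<gamma> \<in> C'" and eq: "u \<beta> = u \<gamma>" and ne: "\<beta> \<noteq> \<gamma>"
    have bC: "\<beta> \<in> C" and gC: "\<gamma> \<in> C" using b g C'sub by auto
    define t where "t = sp \<beta> \<gamma>"
    have tN: "t \<in> NS" using spNS bC gC unfolding t_def by blast
    have dif: "\<beta> t \<noteq> \<gamma> t" using spp[OF ne] unfolding t_def .
    define d where "d = dep t"
    have dn: "d \<le> n" using depn[OF tN] unfolding d_def .
    have td: "(par ^^ d) t = a" using depp[OF tN] unfolding d_def .
    define w where "w = (par ^^ (n - d)) (u \<beta>)"
    have "(par ^^ d) w = (par ^^ (d + (n - d))) (u \<beta>)" unfolding w_def by (simp add: funpow_add)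
    also have "\<dots> = (par ^^ n) (u \<beta>)" using dn by simp
    also have "\<dots> = a" using up[OF b] by blast
    finally have wd: "(par ^^ d) w = a" .
    have bw: "\<beta> w" unfolding w_def using PB1[OF bC] up[OF b] by blast
    have gw: "\<gamma> w" unfolding w_def using PB1[OF gC] up[OF g] eq by metis
    show False
    proof (cases "w = t")
      case True
      then show False using bw gw dif by simp
    next
      case False
      have dj: "Desc w \<inter> Desc t = {}" using same_level[OF wd td False] .
      from dif have "\<beta> t \<or> \<gamma> t" by blast
      then show False
      proof
        assume "\<beta> t" then show False using PB3[OF bC bw] dj by blast
      next
        assume "\<gamma> t" then show False using PB3[OF gC gw] dj by blast
      qed
    qed
  qed
  moreover have "u ` C' \<subseteq> {t. (par ^^ n) t = a \<and> X t \<noteq> {}}"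
    using up PB4 C'sub by blast
  ultimately have "card C' \<le> card {t. (par ^^ n) t = a \<and> X t \<noteq> {}}"
    using card_inj_on_le bound by blast
  also have "\<dots> \<le> M" using bound by blast
  finally show False using cardC' by simp
qed

end


context td
begin

lemma kset:
  assumes "T t s" "S v \<subseteq> Side s t"
  shows "{s'. T t s' \<and> S v \<inter> Side s' t \<noteq> {}} = {s}"
proof -
  have vX: "v \<notin> X t"
  proof
    assume "v \<in> X t"
    then have "t \<in> S v" unfolding S_def by simp
    then show False using assms(2) S1'(2)[OF assms(1)] by blast
  qed
  obtain x where x: "x \<in> S v" using S_ne by blast
  show ?thesis
  proof (rule set_eqI, rule iffI)
    fix s' assume "s' \<in> {s'. T t s' \<and> S v \<inter> Side s' t \<noteq> {}}"
    then have s': "T t s'" "S v \<inter> Side s' t \<noteq> {}" by auto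
    then obtain y where "y \<in> S v" "y \<in> Side s' t" by blast
    from side_stay[OF vX s'(1) this] have "S v \<subseteq> Side s' t" .
    then have "x \<in> Side s' t" "x \<in> Side s t" using x assms(2) by auto
    then show "s' \<in> {s}" using S34[OF s'(1) assms(1)] by blast
  next
    fix s' assume "s' \<in> {s}"
    then show "s' \<in> {s'. T t s' \<and> S v \<inter> Side s' t \<noteq> {}}" using assms x by auto
  qed
qed

lemma side_kc:
  "\<forall>u w. E u w \<longrightarrow> u \<notin> X t \<longrightarrow> w \<notin> X t \<longrightarrow>
     {s. T t s \<and> S u \<inter> Side s t \<noteq> {}} = {s. T t s \<and> S w \<inter> Side s t \<noteq> {}}"
proof (intro allI impI)
  fix u w assume uw: "E u w" "u \<notin> X t" "w \<notin> X t"
  obtain b where b: "u \<in> X b" "w \<in> X b" using edge_bag[OF uw(1)] by blast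
  then have bS: "b \<in> S u" "b \<in> S w" unfolding S_def by auto
  have "{s. T t s \<and> S u \<inter> Side s t \<noteq> {}} = {s. T t s \<and> b \<in> Side s t}"
  proof (rule Collect_cong)
    fix s show "(T t s \<and> S u \<inter> Side s t \<noteq> {}) = (T t s \<and> b \<in> Side s t)"
    proof (cases "T t s")
      case True then show ?thesis using side_kappa[OF uw(2) bS(1) True] by simp
    next
      case False then show ?thesis by simp
    qed
  qed
  moreover have "{s. T t s \<and> S w \<inter> Side s t \<noteq> {}} = {s. T t s \<and> b \<in> Side s t}"
  proof (rule Collect_cong)
    fix s show "(T t s \<and> S w \<inter> Side s t \<noteq> {}) = (T t s \<and> b \<in> Side s t)"
    proof (cases "T t s")
      case True then show ?thesis using side_kappa[OF uw(3) bS(2) True] by simp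
    next
      case False then show ?thesis by simp
    qed
  qed
  ultimately show "{s. T t s \<and> S u \<inter> Side s t \<noteq> {}} = {s. T t s \<and> S w \<inter> Side s t \<noteq> {}}" by simp
qed

lemma S_img:
  assumes "g \<in> Aut E" "\<tau> \<in> Aut T" "\<forall>t. g ` X t = X (\<tau> t)"
  shows "S (g v) \<subseteq> \<tau> ` S v"
proof
  fix b assume b: "b \<in> S (g v)"
  have "surj \<tau>" using assms(2) unfolding Aut_def bij_def by blast
  then obtain r where r: "b = \<tau> r" by blast
  have "g v \<in> g ` X r" using b r assms(3) unfolding S_def by simp
  moreover have "inj g" using assms(1) unfolding Aut_def bij_def by blast
  ultimately have "v \<in> X r" by (simp add: inj_image_mem_iff)
  then show "b \<in> \<tau> ` S v" using r unfolding S_def by blast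
qed

lemma fixA:
  assumes h: "h \<in> Aut E" and hc: "\<forall>v. c (h v) = c v" and pc: "proper_coloring E c"
    and \<tau>: "\<tau> \<in> Aut T" and hX: "\<forall>t. h ` X t = X (\<tau> t)" and fa: "\<tau> a = a"
  shows "h = id"
proof -
  have injh: "inj h" using h unfolding Aut_def bij_def by blast
  have Tt: "T x y \<Longrightarrow> T (\<tau> x) (\<tau> y)" for x y using \<tau> unfolding Aut_def by blast
  have fixpt: "\<tau> t = t \<Longrightarrow> x \<in> X t \<Longrightarrow> h x = x" for t x
  proof (rule ccontr)
    assume t: "\<tau> t = t" and x: "x \<in> X t" and ne: "h x \<noteq> x"
    have "h x \<in> X t" using hX t x by (metis imageI)
    then have "E x (h x)" using clique x ne by metis
    then have "c x \<noteq> c (h x)" using pc unfolding proper_coloring_def by blast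
    then show False using hc by simp
  qed
  have nb: "\<tau> t = t \<Longrightarrow> T t s \<Longrightarrow> \<tau> s = s" for t s
  proof -
    assume t: "\<tau> t = t" and ts: "T t s"
    have T2: "T t (\<tau> s)" using Tt[OF ts] t by simp
    have "X t \<inter> X (\<tau> s) = h ` X t \<inter> h ` X s" using hX t by metis
    also have "\<dots> = h ` (X t \<inter> X s)" using injh by (simp add: image_Int)
    also have "\<dots> = id ` (X t \<inter> X s)"
    proof (rule image_cong)
      fix y assume "y \<in> X t \<inter> X s" then show "h y = id y" using fixpt[OF t] by simp
    qed simp
    also have "\<dots> = X t \<inter> X s" by simp
    finally have "{t, \<tau> s} = {t, s}"
      using ua[unfolded unique_adhesion_def, rule_format, of t "\<tau> s" t s] T2 ts by blast
    moreover have "\<tau> s \<noteq> t" using T2 Tirr by metis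
    ultimately show "\<tau> s = s" by (simp add: doubleton_eq_iff)
  qed
  have all: "\<tau> x = x" for x
  proof -
    have "T\<^sup>*\<^sup>* a x" by (rule Treach)
    then show ?thesis
    proof (induction rule: rtranclp_induct)
      case base then show ?case by (rule fa)
    next
      case (step y z) then show ?case using nb by blast
    qed
  qed
  show "h = id"
  proof
    fix v
    obtain t where "v \<in> X t" using S_ne unfolding S_def by blast
    then show "h v = id v" using fixpt[OF all] by simp
  qed
qed

end


context tdr
begin

lemma compat:
  assumes g: "g \<in> Aut E" and \<tau>: "\<tau> \<in> Aut T" and gX: "\<forall>t. g ` X t = X (\<tau> t)"
    and eqv: "ray_equiv E R0 (g \<circ> R0)"
  shows "\<tau> (par t) = par (\<tau> t)"
proof (rule ccontr)
  assume ne: "\<tau> (par t) \<noteq> par (\<tau> t)"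
  have Tt: "\<And>x y. T x y \<longleftrightarrow> T (\<tau> x) (\<tau> y)" using \<tau> unfolding Aut_def by blast
  have injt: "inj \<tau>" using \<tau> unfolding Aut_def bij_def by blast
  obtain N where N: "\<forall>n\<ge>N. S (R0 n) \<subseteq> Side (par t) t" using par_spec unfolding evs_def by blast
  have N': "\<forall>n\<ge>N. S (g (R0 n)) \<subseteq> Side (\<tau> (par t)) (\<tau> t)"
  proof (intro allI impI)
    fix n assume "N \<le> n"
    have "S (g (R0 n)) \<subseteq> \<tau> ` S (R0 n)" by (rule S_img[OF g \<tau> gX])
    also have "\<dots> \<subseteq> \<tau> ` Side (par t) t" using N \<open>N \<le> n\<close> by blast
    also have "\<dots> \<subseteq> Side (\<tau> (par t)) (\<tau> t)" using S7[OF Tt injt] by blast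
    finally show "S (g (R0 n)) \<subseteq> Side (\<tau> (par t)) (\<tau> t)" .
  qed
  obtain N1 where N1: "\<forall>n\<ge>N1. S (R0 n) \<subseteq> Side (par (\<tau> t)) (\<tau> t)"
    using par_spec unfolding evs_def by blast
  have T1': "T (\<tau> t) (\<tau> (par t))" using Tt Tpar by blast
  have T2': "T (\<tau> t) (par (\<tau> t))" by (rule Tpar)
  define \<kappa> where "\<kappa> v = {s. T (\<tau> t) s \<and> S v \<inter> Side s (\<tau> t) \<noteq> {}}" for v
  have k1: "\<forall>n\<ge>N1. \<kappa> (R0 n) = {par (\<tau> t)}"
    unfolding \<kappa>_def using kset[OF T2'] N1 by blast
  have k2: "\<forall>n\<ge>N. \<kappa> ((g \<circ> R0) n) = {\<tau> (par t)}"
    unfolding \<kappa>_def using kset[OF T1'] N' by simp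
  have kc: "\<forall>u w. E u w \<longrightarrow> u \<notin> X (\<tau> t) \<longrightarrow> w \<notin> X (\<tau> t) \<longrightarrow> \<kappa> u = \<kappa> w"
    unfolding \<kappa>_def by (rule side_kc)
  have "{par (\<tau> t)} \<noteq> {\<tau> (par t)}" using ne by simp
  from sep[of "X (\<tau> t)" E \<kappa> N1 R0 "{par (\<tau> t)}" N "g \<circ> R0" "{\<tau> (par t)}", OF Xfin kc k1 k2 this]
  show False using eqv by blast
qed

lemma compat_iter:
  assumes "\<And>x. \<tau> (par x) = par (\<tau> x)"
  shows "\<tau> ((par ^^ n) x) = (par ^^ n) (\<tau> x)"
proof (induction n)
  case 0 then show ?case by simp
next
  case (Suc n) then show ?case using assms by simp
qed

end


theorem lemma4p4:
  fixes E :: "'v \<Rightarrow> 'v \<Rightarrow> bool"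
    and T :: "'t \<Rightarrow> 't \<Rightarrow> bool"
    and X :: "'t \<Rightarrow> 'v set"
  assumes "graph E"
    and "connected_graph E"
    and "locally_finite E"
    and "quasi_transitive E"
    and "infinite (ends E)"
    and "tree_decomposition E T X"
    and "canonical_td E T X"
    and "\<forall>t. finite (X t) \<and> is_clique E (X t)"
    and "unique_adhesion T X"
    and "\<exists>\<omega>\<in>ends E. \<forall>g\<in>Aut E. stabilizes_end g \<omega>"
  shows "\<not> (\<exists>c :: 'v \<Rightarrow> 'c. proper_coloring E c \<and> periodic_coloring E c)"
proof
  assume "\<exists>c :: 'v \<Rightarrow> 'c. proper_coloring E c \<and> periodic_coloring E c"
  then obtain c :: "'v \<Rightarrow> 'c" where pc: "proper_coloring E c" and per: "periodic_coloring E c"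
    by blast
  obtain \<omega> where om: "\<omega> \<in> ends E" "\<forall>g\<in>Aut E. stabilizes_end g \<omega>" using assms(10) by blast
  then obtain R0 where R0: "is_ray E R0" "\<omega> = {R'. is_ray E R' \<and> ray_equiv E R0 R'}"
    unfolding ends_def by blast
  have tT: "is_tree T" using assms(6) unfolding tree_decomposition_def by blast
  interpret I: tdr T E X R0
    by (rule tdr.intro[OF td.intro[OF tree.intro[OF tT] td_axioms.intro[OF assms(1,3,6,8,9)]]
          tdr_axioms.intro[OF R0(1)]])
  have R0om: "R0 \<in> \<omega>" using R0 ray_refl by blast
  have eqvg: "ray_equiv E R0 (g \<circ> R0)" if "g \<in> Aut E" for g
  proof -
    have "g \<circ> R0 \<in> \<omega>" using om(2) that R0om unfolding stabilizes_end_def by blast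
    then show ?thesis using R0(2) by blast
  qed
  obtain \<sigma> :: "('v \<Rightarrow> 'v) \<Rightarrow> 't \<Rightarrow> 't" where
    sid: "\<sigma> id = id" and shom: "\<forall>g\<in>Aut E. \<forall>h\<in>Aut E. \<sigma> (g \<circ> h) = \<sigma> g \<circ> \<sigma> h"
    and saut: "\<forall>g\<in>Aut E. \<sigma> g \<in> Aut T \<and> (\<forall>t. g ` X t = X (\<sigma> g t))"
    using assms(7) unfolding canonical_td_def by blast
  have comm: "\<sigma> g (I.par t) = I.par (\<sigma> g t)" if g: "g \<in> Aut E" for g t
  proof -
    have "\<sigma> g \<in> Aut T" "\<forall>t. g ` X t = X (\<sigma> g t)" using saut g by blast+
    from I.compat[OF g this eqvg[OF g]] show ?thesis .
  qed
  define H where "H = {g \<in> Aut E. \<forall>v. c (g v) = c v}"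
  have idH: "id \<in> H" unfolding H_def Aut_def by simp
  have Hinv: "inv h \<in> H" and Hbij: "h \<circ> inv h = id" "\<And>w. inv h (h w) = w" if "h \<in> H" for h
  proof -
    have bh: "bij h" and Eh: "\<forall>x y. E x y \<longleftrightarrow> E (h x) (h y)" and ch: "\<forall>v. c (h v) = c v"
      using that unfolding H_def Aut_def by auto
    show "h \<circ> inv h = id" using surj_iff bij_is_surj[OF bh] by blast
    show "\<And>w. inv h (h w) = w" using bh by (simp add: bij_is_inj)
    have hi: "h (inv h x) = x" for x using bh by (simp add: bij_is_surj surj_f_inv_f)
    have "bij (inv h)" using bh by (rule bij_imp_bij_inv)
    moreover have "\<forall>x y. E x y \<longleftrightarrow> E (inv h x) (inv h y)"
    proof (intro allI)
      fix x y
      have "E (inv h x) (inv h y) \<longleftrightarrow> E (h (inv h x)) (h (inv h y))" using Eh by blast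
      then show "E x y \<longleftrightarrow> E (inv h x) (inv h y)" using hi by simp
    qed
    moreover have "\<forall>v. c (inv h v) = c v"
    proof
      fix v
      have "c (h (inv h v)) = c (inv h v)" using ch by blast
      then show "c (inv h v) = c v" using hi by simp
    qed
    ultimately show "inv h \<in> H" unfolding H_def Aut_def by blast
  qed
  have Hcomp: "h1 \<in> H \<Longrightarrow> h2 \<in> H \<Longrightarrow> h1 \<circ> h2 \<in> H" for h1 h2
    unfolding H_def Aut_def by (auto intro: bij_comp)
  have HA: "h \<in> H \<Longrightarrow> h \<in> Aut E" for h unfolding H_def by blast
  have sinv: "h \<in> H \<Longrightarrow> \<sigma> h (\<sigma> (inv h) x) = x" for h x
  proof -
    assume h: "h \<in> H"
    have "\<sigma> (h \<circ> inv h) = \<sigma> h \<circ> \<sigma> (inv h)" using shom HA[OF h] HA[OF Hinv[OF h]] by blast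
    then have "\<sigma> h \<circ> \<sigma> (inv h) = id" using Hbij(1)[OF h] sid by simp
    then show ?thesis by (metis comp_apply id_apply)
  qed
  have finO: "finite (orbits H)" using per unfolding periodic_coloring_def H_def .
  define rep where "rep Ob = (SOME w. Ob = (\<lambda>g. g w) ` H)" for Ob
  define Z where "Z = (\<Union>Ob\<in>orbits H. I.S (rep Ob))"
  have finZ: "finite Z" unfolding Z_def using finO I.S_finite by blast
  have orb: "\<forall>v. \<exists>hw. fst hw \<in> H \<and> I.S (snd hw) \<subseteq> Z \<and> v = fst hw (snd hw)"
  proof
    fix v
    define Ob where "Ob = (\<lambda>g. g v) ` H"
    have ObO: "Ob \<in> orbits H" unfolding Ob_def orbits_def by blast
    have "\<exists>w. Ob = (\<lambda>g. g w) ` H" unfolding Ob_def by blast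
    then have Or: "Ob = (\<lambda>g. g (rep Ob)) ` H" unfolding rep_def by (rule someI_ex)
    have "v \<in> Ob" unfolding Ob_def using image_eqI[of v "\<lambda>g. g v" id H] idH by simp
    then obtain h where h: "h \<in> H" "v = h (rep Ob)" using Or by blast
    have "I.S (rep Ob) \<subseteq> Z" unfolding Z_def using ObO by blast
    then show "\<exists>hw. fst hw \<in> H \<and> I.S (snd hw) \<subseteq> Z \<and> v = fst hw (snd hw)"
      using h by (intro exI[of _ "(h, rep Ob)"]) simp
  qed
  obtain f where f: "\<forall>v. fst (f v) \<in> H \<and> I.S (snd (f v)) \<subseteq> Z \<and> v = fst (f v) (snd (f v))"
    using choice[OF orb] by blast
  define hh where "hh t = fst (f (SOME v. v \<in> X t))" for t
  define psi where "psi t = \<sigma> (inv (hh t)) t" for t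
  have bound: "finite {t. (I.par ^^ n) t = a \<and> X t \<noteq> {}} \<and> card {t. (I.par ^^ n) t = a \<and> X t \<noteq> {}} \<le> card Z"
    for n a
  proof -
    define Lv where "Lv = {t. (I.par ^^ n) t = a \<and> X t \<noteq> {}}"
    have hhH: "hh t \<in> H" for t unfolding hh_def using f by blast
    have psiZ: "psi t \<in> Z" if t: "t \<in> Lv" for t
    proof -
      define v where "v = (SOME v. v \<in> X t)"
      have vX: "v \<in> X t" unfolding v_def using t unfolding Lv_def by (simp add: some_in_eq)
      define w where "w = snd (f v)"
      have "hh t = fst (f v)" unfolding hh_def v_def by simp
      then have hv: "v = hh t w" using f unfolding w_def by simp
      have wS: "I.S w \<subseteq> Z" unfolding w_def using f by blast
      have "inv (hh t) v = w" using hv Hbij(2)[OF hhH] by simp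
      then have "w \<in> inv (hh t) ` X t" using vX by blast
      also have "\<dots> = X (\<sigma> (inv (hh t)) t)" using saut HA[OF Hinv[OF hhH]] by blast
      finally have "psi t \<in> I.S w" unfolding psi_def I.S_def by simp
      then show ?thesis using wS by blast
    qed
    have "inj_on psi Lv"
    proof (rule inj_onI)
      fix t1 t2 assume t1: "t1 \<in> Lv" and t2: "t2 \<in> Lv" and eq: "psi t1 = psi t2"
      define h1 where "h1 = hh t1"
      define h2 where "h2 = hh t2"
      have h1H: "h1 \<in> H" and h2H: "h2 \<in> H" unfolding h1_def h2_def using hhH by auto
      define k where "k = h2 \<circ> inv h1"
      have kH: "k \<in> H" unfolding k_def using Hcomp[OF h2H Hinv[OF h1H]] .
      have "\<sigma> k t1 = \<sigma> h2 (\<sigma> (inv h1) t1)"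
        using shom HA[OF h2H] HA[OF Hinv[OF h1H]] unfolding k_def by simp
      also have "\<sigma> (inv h1) t1 = \<sigma> (inv h2) t2" using eq unfolding psi_def h1_def h2_def .
      also have "\<sigma> h2 (\<sigma> (inv h2) t2) = t2" by (rule sinv[OF h2H])
      finally have kt: "\<sigma> k t1 = t2" .
      have "\<sigma> k a = \<sigma> k ((I.par ^^ n) t1)" using t1 unfolding Lv_def by simp
      also have "\<dots> = (I.par ^^ n) (\<sigma> k t1)"
        using I.compat_iter[of "\<sigma> k"] comm[OF HA[OF kH]] by blast
      also have "\<dots> = a" using kt t2 unfolding Lv_def by simp
      finally have ka: "\<sigma> k a = a" .
      have kc: "\<forall>v. c (k v) = c v" using kH unfolding H_def by blast
      have ks: "\<sigma> k \<in> Aut T" "\<forall>t. k ` X t = X (\<sigma> k t)" using saut HA[OF kH] by blast+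
      have "k = id" using I.fixA[of k c "\<sigma> k" a, OF HA[OF kH] kc pc ks ka] .
      then have "\<sigma> k = id" using sid by simp
      then show "t1 = t2" using kt by simp
    qed
    moreover have "psi ` Lv \<subseteq> Z" using psiZ by blast
    ultimately have "finite Lv \<and> card Lv \<le> card Z"
      using inj_on_finite[of psi Lv Z, OF _ _ finZ] card_inj_on_le[of psi Lv Z, OF _ _ finZ] by blast
    then show ?thesis unfolding Lv_def .
  qed
  have finB: "finite {I.below Q | Q. is_ray E Q}" using I.count[OF bound] .
  have "ends E \<subseteq> (\<lambda>\<beta>. {Q'. is_ray E Q' \<and> I.below Q' = \<beta>}) ` {I.below Q | Q. is_ray E Q}"
  proof
    fix e assume "e \<in> ends E"
    then obtain R where R: "is_ray E R" "e = {R'. is_ray E R' \<and> ray_equiv E R R'}"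
      unfolding ends_def by blast
    have "e = {Q'. is_ray E Q' \<and> I.below Q' = I.below R}"
      unfolding R(2)
    proof (rule Collect_cong)
      fix R' show "(is_ray E R' \<and> ray_equiv E R R') = (is_ray E R' \<and> I.below R' = I.below R)"
      proof (cases "is_ray E R'")
        case True
        have "ray_equiv E R R' = (I.below R = I.below R')" by (rule I.equiv_iff[OF R(1) True])
        then show ?thesis using True by auto
      next
        case False then show ?thesis by simp
      qed
    qed
    then show "e \<in> (\<lambda>\<beta>. {Q'. is_ray E Q' \<and> I.below Q' = \<beta>}) ` {I.below Q | Q. is_ray E Q}"
      using R(1) by blast
  qed
  then have "finite (ends E)" using finite_surj[OF finB] by blast
  then show False using assms(5) by blast
qed


end
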